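(* Let $H$ be a separable infinite-dimensional complex Hilbert space, let $R>1$ and $B_R=\{T\in L(H):\|T\|\le R\}$. Given $x\in H\setminus\{0\}$, the set $L_{HC}(x)$ of operators $T\in B_R$ for which $x$ is a hypercyclic vector is a dense $G_\delta$ subset of $B_R$ equipped with the strong operator topology.
   Context: $x$ is hypercyclic for $T$ if the orbit $\{x,Tx,T^2x,\dots\}$ is norm-dense in $H$. *)

theory Defs
  imports "HOL-Analysis.Analysis"
begin

text \<open>A complex Hilbert space is modelled as a real Hilbert space (real_inner + complete_space)
  equipped with an orthogonal complex structure J (J models multiplication by the imaginary unit).\<close>

definition complex_structure :: "('a::real_inner \<Rightarrow> 'a) \<Rightarrow> bool" where
  "complex_structure J \<longleftrightarrow> linear J \<and> (\<forall>v. J (J v) = - v) \<and> (\<forall>u v. inner (J u) (J v) = inner u v)"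

text \<open>Bounded complex-linear operators: bounded (real-)linear operators commuting with J.\<close>
definition complex_ops :: "('a::real_inner \<Rightarrow> 'a) \<Rightarrow> ('a \<Rightarrow>\<^sub>L 'a) set" where
  "complex_ops J = {T. \<forall>v. blinfun_apply T (J v) = J (blinfun_apply T v)}"

definition op_ball :: "('a::real_inner \<Rightarrow> 'a) \<Rightarrow> real \<Rightarrow> ('a \<Rightarrow>\<^sub>L 'a) set" where
  "op_ball J R = {T \<in> complex_ops J. norm T \<le> R}"

text \<open>Strong operator topology on a set A of operators: the topology of pointwise norm convergence
  (pullback of the product topology on functions).\<close>
definition sot_on :: "('a::real_normed_vector \<Rightarrow>\<^sub>L 'a) set \<Rightarrow> ('a \<Rightarrow>\<^sub>L 'a) topology" where
  "sot_on A = pullback_topology A blinfun_apply euclidean"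

definition hypercyclic :: "('a::real_normed_vector \<Rightarrow>\<^sub>L 'a) \<Rightarrow> 'a \<Rightarrow> bool" where
  "hypercyclic T x \<longleftrightarrow> closure (range (\<lambda>n. (blinfun_apply T ^^ n) x)) = UNIV"

definition L_HC :: "('a::real_inner \<Rightarrow> 'a) \<Rightarrow> real \<Rightarrow> 'a \<Rightarrow> ('a \<Rightarrow>\<^sub>L 'a) set" where
  "L_HC J R x = {T \<in> op_ball J R. hypercyclic T x}"

end

theory Submission
  imports Defs
begin


locale cstruct =
  fixes J :: "'a::{real_inner,complete_space} \<Rightarrow> 'a"
  assumes cs: "complex_structure J"
begin

lemma lin: "linear J" using cs by (simp add: complex_structure_def)
lemma JJ[simp]: "J (J v) = - v" using cs by (simp add: complex_structure_def)
lemma inner_JJ[simp]: "inner (J u) (J v) = inner u v" using cs by (simp add: complex_structure_def)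
lemma J_add: "J (a + b) = J a + J b" using lin by (simp add: linear_add)
lemma J_scale: "J (r *\<^sub>R a) = r *\<^sub>R J a" using lin by (simp add: linear_scale)
lemma J_diff: "J (a - b) = J a - J b" using lin by (simp add: linear_diff)
lemma J_0[simp]: "J 0 = 0" using lin by (simp add: linear_0)
lemma J_neg: "J (- a) = - J a" using lin by (simp add: linear_neg)
lemma J_sum: "J (sum f S) = (\<Sum>i\<in>S. J (f i))" using lin by (simp add: linear_sum)
lemma norm_J[simp]: "norm (J v) = norm v"
  by (simp add: norm_eq_sqrt_inner)
lemma inner_J_left: "inner (J u) v = - inner u (J v)"
  using inner_JJ[of "J u" v] by (simp del: inner_JJ)
lemma inner_J_self[simp]: "inner u (J u) = 0"
  using inner_J_left[of u u] by (simp add: inner_commute)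
lemma inner_J_self'[simp]: "inner (J u) u = 0"
  using inner_J_self by (simp add: inner_commute)
lemma bl: "bounded_linear J"
  using lin by (auto intro!: bounded_linear_intro[where K=1] simp: J_add J_scale)

end

definition ONF :: "'i set \<Rightarrow> ('i \<Rightarrow> 'a::real_inner) \<Rightarrow> bool" where
  "ONF I b \<longleftrightarrow> (\<forall>i\<in>I. \<forall>j\<in>I. inner (b i) (b j) = (if i = j then 1 else 0))"

lemma ONF_coeff:
  assumes "ONF I b" "finite I" "j \<in> I"
  shows "inner (\<Sum>i\<in>I. f i *\<^sub>R b i) (b j) = f j"
proof -
  have "inner (\<Sum>i\<in>I. f i *\<^sub>R b i) (b j) = (\<Sum>i\<in>I. f i * inner (b i) (b j))"
    by (simp add: inner_sum_left)
  also have "\<dots> = (\<Sum>i\<in>I. if i = j then f i else 0)"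
    using assms(1,3) by (intro sum.cong) (auto simp: ONF_def)
  also have "\<dots> = f j" using assms by simp
  finally show ?thesis .
qed

lemma ONF_inner_sums:
  assumes "ONF I b" "finite I"
  shows "inner (\<Sum>i\<in>I. f i *\<^sub>R b i) (\<Sum>j\<in>I. g j *\<^sub>R b j) = (\<Sum>i\<in>I. f i * g i)"
proof -
  have "inner (\<Sum>i\<in>I. f i *\<^sub>R b i) (\<Sum>j\<in>I. g j *\<^sub>R b j)
      = (\<Sum>j\<in>I. g j * inner (\<Sum>i\<in>I. f i *\<^sub>R b i) (b j))"
    by (simp add: inner_sum_right)
  also have "\<dots> = (\<Sum>j\<in>I. g j * f j)"
    using assms by (intro sum.cong) (auto simp: ONF_coeff)
  finally show ?thesis by (simp add: mult.commute)
qed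

lemma ONF_norm2:
  assumes "ONF I b" "finite I"
  shows "(norm (\<Sum>i\<in>I. f i *\<^sub>R b i))\<^sup>2 = (\<Sum>i\<in>I. (f i)\<^sup>2)"
  using ONF_inner_sums[OF assms, of f f]
  by (simp add: power2_norm_eq_inner power2_eq_square[symmetric])

lemma ONF_bessel:
  assumes "ONF I b" "finite I"
  shows "(\<Sum>i\<in>I. (inner z (b i))\<^sup>2) \<le> (norm z)\<^sup>2"
proof -
  define p where "p = (\<Sum>i\<in>I. inner z (b i) *\<^sub>R b i)"
  have zp: "inner z p = (\<Sum>i\<in>I. (inner z (b i))\<^sup>2)"
    by (simp add: p_def inner_sum_right power2_eq_square)
  have pp: "inner p p = (\<Sum>i\<in>I. (inner z (b i))\<^sup>2)"
    unfolding p_def using ONF_inner_sums[OF assms] by (simp add: power2_eq_square)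
  have "0 \<le> inner (z - p) (z - p)" by simp
  also have "\<dots> = inner z z - 2 * inner z p + inner p p"
    by (simp add: inner_diff_left inner_diff_right inner_commute)
  finally show ?thesis using zp pp by (simp add: power2_norm_eq_inner)
qed

lemma ONF_subset: "ONF I b \<Longrightarrow> K \<subseteq> I \<Longrightarrow> ONF K b"
  unfolding ONF_def by blast

definition ONS :: "'a::real_inner set \<Rightarrow> bool" where
  "ONS E \<longleftrightarrow> finite E \<and> (\<forall>e\<in>E. norm e = 1) \<and> (\<forall>e\<in>E. \<forall>e'\<in>E. e \<noteq> e' \<longrightarrow> inner e e' = 0)"

lemma ONS_ONF: "ONS E \<Longrightarrow> ONF E (\<lambda>e. e)"
  by (auto simp: ONS_def ONF_def norm_eq_sqrt_inner)

definition proj :: "'a::real_inner set \<Rightarrow> 'a \<Rightarrow> 'a" where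
  "proj E z = (\<Sum>e\<in>E. inner z e *\<^sub>R e)"

lemma proj_in_span: "proj E z \<in> span E"
  unfolding proj_def by (intro span_sum span_mul span_base)

lemma proj_coeff: "ONS E \<Longrightarrow> e \<in> E \<Longrightarrow> inner (proj E z) e = inner z e"
  unfolding proj_def using ONF_coeff[of E "\<lambda>e. e"] ONS_ONF by (auto simp: ONS_def)

lemma proj_perp:
  assumes "ONS E" "g \<in> span E"
  shows "inner (z - proj E z) g = 0"
proof -
  have "orthogonal (z - proj E z) g"
    using assms(2)
  proof (rule orthogonal_to_span)
    fix e assume "e \<in> E"
    then show "orthogonal (z - proj E z) e"
      using proj_coeff[OF assms(1)] by (simp add: orthogonal_def inner_diff_left)
  qed
  then show ?thesis by (simp add: orthogonal_def)
qed

lemma proj_unique: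
  assumes "ONS E" "p \<in> span E" "\<And>g. g \<in> span E \<Longrightarrow> inner (z - p) g = 0"
  shows "proj E z = p"
proof -
  have d: "proj E z - p \<in> span E" using assms(2) proj_in_span span_diff by blast
  have "proj E z - p = (z - p) - (z - proj E z)" by simp
  then have "inner (proj E z - p) (proj E z - p) = inner (z - p) (proj E z - p) - inner (z - proj E z) (proj E z - p)"
    by (metis inner_diff_left)
  also have "\<dots> = 0" using assms(3)[OF d] proj_perp[OF assms(1) d] by simp
  finally show ?thesis by simp
qed

lemma proj_id: "ONS E \<Longrightarrow> g \<in> span E \<Longrightarrow> proj E g = g"
  by (rule proj_unique) auto

lemma proj_pyth:
  assumes "ONS E"
  shows "(norm z)\<^sup>2 = (norm (proj E z))\<^sup>2 + (norm (z - proj E z))\<^sup>2"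
proof -
  have o: "inner (z - proj E z) (proj E z) = 0" using proj_perp[OF assms proj_in_span] .
  define p where "p = proj E z"
  define q where "q = z - p"
  have zpq: "z = p + q" by (simp add: q_def)
  have o': "inner q p = 0" "inner p q = 0" using o by (simp_all add: p_def q_def inner_commute)
  have "(norm z)\<^sup>2 = inner (p + q) (p + q)"
    by (metis zpq power2_norm_eq_inner)
  also have "\<dots> = inner p p + inner p q + inner q p + inner q q"
    by (simp only: inner_add_left inner_add_right add.assoc)
  also have "\<dots> = (norm p)\<^sup>2 + (norm q)\<^sup>2"
    using o' by (simp add: power2_norm_eq_inner)
  finally show ?thesis by (simp add: p_def q_def)
qed

lemma proj_norm_le: "ONS E \<Longrightarrow> norm (proj E z) \<le> norm z"
  using proj_pyth[of E z] by (metis le_add_same_cancel1 norm_ge_zero power2_le_imp_le zero_le_power2)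

lemma proj_bl: "bounded_linear (proj E)"
  unfolding proj_def
  by (intro bounded_linear_sum bounded_linear_compose[OF bounded_linear_scaleR_left bounded_linear_inner_left])

lemma GS:
  assumes "finite S"
  shows "\<exists>E. ONS E \<and> span E = span (S::'a::real_inner set)"
  using assms
proof (induction S rule: finite_induct)
  case empty
  show ?case by (rule exI[of _ "{}"]) (simp add: ONS_def)
next
  case (insert a S)
  then obtain E where E: "ONS E" "span E = span S" by blast
  define a' where "a' = a - proj E a"
  have sp: "span (insert a S) = span (insert a E)"
    using E(2) by (simp add: span_insert)
  show ?case
  proof (cases "a' = 0")
    case True
    then have "a \<in> span E" using proj_in_span[of E a] by (simp add: a'_def)
    then have "span (insert a E) = span E" by (simp add: span_redundant)
    then show ?thesis using E sp by auto
  next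
    case False
    define e where "e = a' /\<^sub>R norm a'"
    have ne: "norm e = 1" using False by (simp add: e_def)
    have oe: "inner e e' = 0" if "e' \<in> E" for e'
      using proj_perp[OF E(1), of e' a] that span_base[of e' E]
      by (simp add: e_def a'_def)
    have ON: "ONS (insert e E)"
      using E(1) ne oe unfolding ONS_def by (auto simp: inner_commute)
    have "span (insert a E) = span (insert a' E)"
      by (rule eq_span_insert_eq) (simp add: a'_def proj_in_span)
    also have "\<dots> = span (insert e E)"
    proof -
      have "a' = norm a' *\<^sub>R e" using False by (simp add: e_def)
      then have "a' \<in> span (insert e E)" by (metis span_base insertI1 span_mul)
      moreover have "e \<in> span (insert a' E)" unfolding e_def by (simp add: span_base span_mul)
      ultimately have "insert a' E \<subseteq> span (insert e E)" "insert e E \<subseteq> span (insert a' E)"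
        using span_superset[of "insert e E"] span_superset[of "insert a' E"] by auto
      then show ?thesis
        using span_minimal[OF _ subspace_span] by (metis subset_antisym)
    qed
    finally show ?thesis using ON sp by metis
  qed
qed


definition rk :: "('a \<Rightarrow> 'a) \<Rightarrow> 'a \<Rightarrow> 'a \<Rightarrow> 'a \<Rightarrow> 'a::real_inner" where
  "rk J a b z = inner z a *\<^sub>R b + inner z (J a) *\<^sub>R J b"

lemma perp_exists:
  fixes S :: "'a::real_inner set"
  assumes inf: "\<forall>B::'a set. finite B \<longrightarrow> span B \<noteq> UNIV" and "finite S"
  shows "\<exists>v. norm v = 1 \<and> (\<forall>s\<in>S. inner v s = 0)"
proof -
  obtain E where E: "ONS E" "span E = span S" using GS[OF assms(2)] by blast
  obtain z where z: "z \<notin> span S" using inf assms(2) by blast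
  define w where "w = z - proj E z"
  have "w \<noteq> 0" using z proj_in_span[of E z] E(2) by (auto simp: w_def)
  moreover have "inner w s = 0" if "s \<in> S" for s
    using proj_perp[OF E(1), of s z] that E(2) span_base[of s S] by (simp add: w_def)
  ultimately show ?thesis
    by (intro exI[of _ "w /\<^sub>R norm w"]) auto
qed

context cstruct
begin

lemma rk_J: "rk J a b (J z) = J (rk J a b z)"
  by (simp add: rk_def J_add J_scale inner_J_left)

lemma rk_bl: "bounded_linear (rk J a b)"
  unfolding rk_def
  by (intro bounded_linear_add bounded_linear_compose[OF bounded_linear_scaleR_left bounded_linear_inner_left])

lemma rk_zero: "inner z a = 0 \<Longrightarrow> inner z (J a) = 0 \<Longrightarrow> rk J a b z = 0"
  by (simp add: rk_def)

lemma rk_norm: "norm (rk J a b z) \<le> 2 * norm a * norm b * norm z"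
proof -
  have "norm (rk J a b z) \<le> \<bar>inner z a\<bar> * norm b + \<bar>inner z (J a)\<bar> * norm b"
    unfolding rk_def by (rule order_trans[OF norm_triangle_ineq]) simp
  also have "\<dots> \<le> norm z * norm a * norm b + norm z * norm a * norm b"
    by (intro add_mono mult_right_mono) (auto intro: order_trans[OF Cauchy_Schwarz_ineq2])
  finally show ?thesis by (simp add: algebra_simps)
qed

lemma proj_J:
  assumes "ONS E" "\<And>g. g \<in> span E \<Longrightarrow> J g \<in> span E"
  shows "proj E (J z) = J (proj E z)"
proof (rule proj_unique[OF assms(1)])
  show "J (proj E z) \<in> span E" using assms(2) proj_in_span by blast
  fix g assume g: "g \<in> span E"
  have "inner (J z - J (proj E z)) g = inner (J (z - proj E z)) g" by (simp add: J_diff)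
  also have "\<dots> = - inner (z - proj E z) (J g)" by (rule inner_J_left)
  also have "\<dots> = 0" using proj_perp[OF assms(1) assms(2)[OF g]] by simp
  finally show "inner (J z - J (proj E z)) g = 0" .
qed

lemma chain_exists:
  assumes inf: "\<forall>B::'a set. finite B \<longrightarrow> span B \<noteq> UNIV" and S: "finite S"
  shows "\<exists>ws::nat \<Rightarrow> 'a. \<forall>i\<le>N. \<forall>j\<le>N. inner (ws i) (ws j) = (if i = j then 1 else 0)
            \<and> inner (ws i) (J (ws j)) = 0 \<and> (\<forall>s\<in>S. inner (ws i) s = 0 \<and> inner (ws i) (J s) = 0)"
proof (induction N)
  case 0
  obtain v where v: "norm v = 1" "\<forall>s\<in>S \<union> J ` S. inner v s = 0"
    using perp_exists[OF inf, of "S \<union> J ` S"] S by blast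
  have "inner v v = 1" using v(1) by (simp add: norm_eq_sqrt_inner)
  then show ?case using v(2) by (intro exI[of _ "\<lambda>_. v"]) auto
next
  case (Suc N)
  then obtain ws where ws: "\<forall>i\<le>N. \<forall>j\<le>N. inner (ws i) (ws j) = (if i = j then 1 else 0)
            \<and> inner (ws i) (J (ws j)) = 0 \<and> (\<forall>s\<in>S. inner (ws i) s = 0 \<and> inner (ws i) (J s) = 0)"
    by blast
  define W where "W = S \<union> J ` S \<union> ws ` {..N} \<union> J ` ws ` {..N}"
  obtain v where v: "norm v = 1" "\<forall>s\<in>W. inner v s = 0"
    using perp_exists[OF inf, of W] S by (auto simp: W_def)
  have vv: "inner v v = 1" using v(1) by (simp add: norm_eq_sqrt_inner)
  have v1: "inner v (ws j) = 0" "inner v (J (ws j)) = 0" if "j \<le> N" for j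
    using v(2) that by (auto simp: W_def)
  have v2: "inner (ws j) (J v) = 0" if "j \<le> N" for j
    using v1(2)[OF that] inner_J_left[of v "ws j"] by (simp add: inner_commute)
  have v3: "inner v s = 0" "inner v (J s) = 0" if "s \<in> S" for s
    using v(2) that by (auto simp: W_def)
  show ?case
  proof (intro exI[of _ "ws(Suc N := v)"] allI impI conjI ballI)
    fix i j assume i: "i \<le> Suc N" and j: "j \<le> Suc N"
    show "inner ((ws(Suc N := v)) i) ((ws(Suc N := v)) j) = (if i = j then 1 else 0)"
      using ws v1 vv i j by (cases "i = Suc N"; cases "j = Suc N") (auto simp: inner_commute le_Suc_eq)
    show "inner ((ws(Suc N := v)) i) (J ((ws(Suc N := v)) j)) = 0"
      using ws v1 v2 i j by (cases "i = Suc N"; cases "j = Suc N") (auto simp: le_Suc_eq)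
  next
    fix i s assume i: "i \<le> Suc N" and s: "s \<in> S"
    show "inner ((ws(Suc N := v)) i) s = 0" "inner ((ws(Suc N := v)) i) (J s) = 0"
      using ws v3 i s by (cases "i = Suc N"; auto simp: le_Suc_eq)+
  qed
qed

end


locale constr = cstruct J for J :: "'a::{real_inner,complete_space} \<Rightarrow> 'a" +
  fixes E :: "'a set" and ws :: "nat \<Rightarrow> 'a" and N :: nat and T0 :: "'a \<Rightarrow>\<^sub>L 'a"
    and x y :: 'a and \<eta> c \<tau> R :: real
    and P A Cc Tp U V Qv Tf :: "'a \<Rightarrow> 'a" and xp yp bv :: 'a and t s :: real
  assumes ONS: "ONS E"
    and Jinv: "\<And>g. g \<in> span E \<Longrightarrow> J g \<in> span E"
    and ws_orth: "\<And>i j. i \<le> N \<Longrightarrow> j \<le> N \<Longrightarrow> inner (ws i) (ws j) = (if i = j then 1 else 0)"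
    and ws_orthJ: "\<And>i j. i \<le> N \<Longrightarrow> j \<le> N \<Longrightarrow> inner (ws i) (J (ws j)) = 0"
    and ws_perp: "\<And>i g. i \<le> N \<Longrightarrow> g \<in> span E \<Longrightarrow> inner (ws i) g = 0"
    and x_in: "x \<in> span E" and x_nz: "x \<noteq> 0"
    and T0J: "\<And>v. T0 (J v) = J (T0 v)" and T0R: "norm T0 \<le> R"
    and eta: "0 < \<eta>" "\<eta> \<le> 1/4" and Rpos: "0 < R"
    and c_def: "c = (1 - \<eta>) * R"
    and tau: "0 < \<tau>" "\<tau> \<le> norm x / 4"
    and P_def: "P = proj E"
    and A_def: "A = (\<lambda>z. (1 - 2*\<eta>) *\<^sub>R P (T0 (P z)))"
    and Cc_def: "Cc = (\<lambda>z. c *\<^sub>R (\<Sum>j<N. rk J (ws j) (ws (Suc j)) z))"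
    and xp_def: "xp = x + \<tau> *\<^sub>R ws 0"
    and t_def: "t = \<tau> / (norm xp)\<^sup>2"
    and s_def: "s = t / (1 - t * \<tau>)"
    and Qv_def: "Qv = rk J xp (ws 0)"
    and U_def: "U = (\<lambda>z. z - t *\<^sub>R Qv z)"
    and V_def: "V = (\<lambda>z. z + s *\<^sub>R Qv z)"
    and yp_def: "yp = V y"
    and bv_def: "bv = (1 / (\<tau> * c ^ N)) *\<^sub>R (yp - (A ^^ Suc N) x)"
    and Tp_def: "Tp = (\<lambda>z. A z + Cc z + rk J (ws N) bv z)"
    and Tf_def: "Tf = (\<lambda>z. U (Tp (V z)))"
begin

lemma ws_perp': "i \<le> N \<Longrightarrow> g \<in> span E \<Longrightarrow> inner g (ws i) = 0"
  using ws_perp by (simp add: inner_commute)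

lemma wsJ_perp: "i \<le> N \<Longrightarrow> g \<in> span E \<Longrightarrow> inner (J (ws i)) g = 0"
  using ws_perp[of i "J g"] Jinv inner_J_left[of "ws i" g] by simp

lemma wsJ_perp': "i \<le> N \<Longrightarrow> g \<in> span E \<Longrightarrow> inner g (J (ws i)) = 0"
  using wsJ_perp by (simp add: inner_commute)

lemma ws_norm: "i \<le> N \<Longrightarrow> norm (ws i) = 1"
  using ws_orth[of i i] by (simp add: norm_eq_sqrt_inner)

lemma P_in: "P z \<in> span E" by (simp add: P_def proj_in_span)

lemma P_ws: assumes "i \<le> N" shows "P (ws i) = 0"
  unfolding P_def proj_def by (rule sum.neutral) (simp add: ws_perp[OF assms] span_base)

lemma P_norm: "norm (P z) \<le> norm z" using proj_norm_le[OF ONS] by (simp add: P_def)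

lemma P_id: "g \<in> span E \<Longrightarrow> P g = g" using proj_id[OF ONS] by (simp add: P_def)

lemma P_J: "P (J z) = J (P z)" using proj_J[OF ONS Jinv] by (simp add: P_def)

lemma P_bl: "bounded_linear P" by (simp add: P_def proj_bl)

lemma T0_bound: "norm (T0 z) \<le> R * norm z"
  using norm_blinfun[of T0 z] T0R by (meson mult_right_mono norm_ge_zero order_trans)

lemma A_in: "A z \<in> span E"
  by (simp add: A_def span_mul P_in)

lemma A_norm: "norm (A z) \<le> (1 - 2*\<eta>) * R * norm (P z)"
proof -
  have "norm (A z) = (1 - 2*\<eta>) * norm (P (T0 (P z)))" using eta by (simp add: A_def)
  also have "\<dots> \<le> (1 - 2*\<eta>) * (R * norm (P z))"
    using eta P_norm T0_bound by (intro mult_left_mono) (auto intro: order_trans)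
  finally show ?thesis by simp
qed

lemma A_norm': "norm (A z) \<le> (1 - 2*\<eta>) * R * norm z"
proof -
  have "0 \<le> (1 - 2*\<eta>) * R" using eta Rpos by auto
  then have "(1 - 2*\<eta>) * R * norm (P z) \<le> (1 - 2*\<eta>) * R * norm z"
    using P_norm[of z] by (simp add: mult_left_mono)
  then show ?thesis using A_norm[of z] by linarith
qed

lemma A_ws: "i \<le> N \<Longrightarrow> A (ws i) = 0"
  by (simp add: A_def P_ws blinfun.zero_right) (simp add: P_def proj_def)

lemma A_J: "A (J z) = J (A z)"
  by (simp add: A_def P_J T0J J_scale)

lemma A_bl: "bounded_linear A"
  unfolding A_def
  by (intro bounded_linear_compose[OF bounded_linear_scaleR_right] bounded_linear_compose[OF P_bl]
      bounded_linear_compose[OF blinfun.bounded_linear_right P_bl])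

lemma Apow_in: "(A ^^ k) x \<in> span E"
  by (cases k) (auto simp: x_in A_in)

lemma Apow_norm: "norm ((A ^^ k) x) \<le> ((1 - 2*\<eta>) * R) ^ k * norm x"
proof (induction k)
  case 0 then show ?case by simp
next
  case (Suc k)
  have "norm ((A ^^ Suc k) x) \<le> (1 - 2*\<eta>) * R * norm ((A ^^ k) x)" using A_norm' by simp
  also have "\<dots> \<le> (1 - 2*\<eta>) * R * (((1 - 2*\<eta>) * R) ^ k * norm x)"
    using Suc eta Rpos by (intro mult_left_mono) auto
  finally show ?case by (simp add: algebra_simps)
qed


lemma c_pos: "0 < c" using eta Rpos by (simp add: c_def)
lemma a_le_c: "(1 - 2*\<eta>) * R \<le> c" using eta Rpos by (simp add: c_def algebra_simps)
lemma a_nonneg: "0 \<le> (1 - 2*\<eta>) * R" using eta Rpos by simp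

lemma Cc_bl: "bounded_linear Cc"
  unfolding Cc_def
  by (intro bounded_linear_compose[OF bounded_linear_scaleR_right] bounded_linear_sum rk_bl)

lemma Cc_J: "Cc (J z) = J (Cc z)"
  by (simp add: Cc_def rk_J J_sum J_scale)

lemma Cc_span: assumes "g \<in> span E" shows "Cc g = 0"
proof -
  have "rk J (ws j) (ws (Suc j)) g = 0" if "j < N" for j
    using that assms by (intro rk_zero) (auto simp: ws_perp' wsJ_perp')
  then show ?thesis by (simp add: Cc_def)
qed

lemma Cc_ws: assumes "k < N" shows "Cc (ws k) = c *\<^sub>R ws (Suc k)"
proof -
  have "rk J (ws j) (ws (Suc j)) (ws k) = (if j = k then ws (Suc k) else 0)" if "j < N" for j
    using that assms ws_orth[of k j] ws_orthJ[of k j] by (auto simp: rk_def)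
  then have "(\<Sum>j<N. rk J (ws j) (ws (Suc j)) (ws k)) = (\<Sum>j<N. if j = k then ws (Suc k) else 0)"
    by (intro sum.cong) auto
  also have "\<dots> = ws (Suc k)" using assms by simp
  finally show ?thesis by (simp add: Cc_def)
qed

lemma Cc_wsN: "Cc (ws N) = 0"
proof -
  have "rk J (ws j) (ws (Suc j)) (ws N) = 0" if "j < N" for j
    using that ws_orth[of N j] ws_orthJ[of N j] by (intro rk_zero) auto
  then show ?thesis by (simp add: Cc_def)
qed

definition bb :: "nat \<times> bool \<Rightarrow> 'a" where
  "bb = (\<lambda>(j, \<beta>). if \<beta> then J (ws j) else ws j)"

lemma bb_inner: assumes "j \<le> N" "j' \<le> N"
  shows "inner (bb (j,\<beta>)) (bb (j',\<beta>')) = (if (j,\<beta>) = (j',\<beta>') then 1 else 0)"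
  using assms ws_orth[of j j'] ws_orthJ[of j j'] ws_orthJ[of j' j] inner_J_left[of "ws j" "ws j'"]
  by (cases \<beta>; cases \<beta>') (auto simp: bb_def inner_commute)

lemma ONF_bb: "ONF ({..N} \<times> UNIV) bb"
  unfolding ONF_def
proof (intro ballI)
  fix i k assume "i \<in> {..N} \<times> (UNIV::bool set)" "k \<in> {..N} \<times> (UNIV::bool set)"
  then obtain j1 b1 j2 b2 where "i = (j1,b1)" "k = (j2,b2)" "j1 \<le> N" "j2 \<le> N" by auto
  then show "inner (bb i) (bb k) = (if i = k then 1 else 0)" using bb_inner by simp
qed

lemma ONF_bbs: "ONF ({..<N} \<times> UNIV) (\<lambda>i. bb (Suc (fst i), snd i))"
  unfolding ONF_def
proof (intro ballI)
  fix i k assume "i \<in> {..<N} \<times> (UNIV::bool set)" "k \<in> {..<N} \<times> (UNIV::bool set)"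
  then obtain j1 b1 j2 b2 where "i = (j1,b1)" "k = (j2,b2)" "Suc j1 \<le> N" "Suc j2 \<le> N" by auto
  then show "inner (bb (Suc (fst i), snd i)) (bb (Suc (fst k), snd k)) = (if i = k then 1 else 0)"
    using bb_inner[of "Suc j1" "Suc j2" b1 b2] by simp
qed

lemma sum_bool_prod: "(\<Sum>i\<in>Ks \<times> (UNIV::bool set). f i) = (\<Sum>j\<in>Ks. f (j,False) + f (j,True))"
proof -
  have "(\<Sum>i\<in>Ks \<times> (UNIV::bool set). f i) = (\<Sum>j\<in>Ks. \<Sum>b\<in>UNIV. f (j,b))"
    by (simp add: sum.cartesian_product)
  also have "\<dots> = (\<Sum>j\<in>Ks. f (j,False) + f (j,True))"
    by (simp add: UNIV_bool)
  finally show ?thesis .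
qed

lemma Cc_alt: "Cc z = c *\<^sub>R (\<Sum>i\<in>{..<N} \<times> UNIV. inner z (bb i) *\<^sub>R bb (Suc (fst i), snd i))"
  unfolding Cc_def sum_bool_prod by (simp add: rk_def bb_def)

lemma Cc_norm2: "(norm (Cc z))\<^sup>2 = c\<^sup>2 * (\<Sum>i\<in>{..<N} \<times> UNIV. (inner z (bb i))\<^sup>2)"
  unfolding Cc_alt using ONF_norm2[OF ONF_bbs, of "\<lambda>i. inner z (bb i)"] c_pos
  by (simp add: power_mult_distrib)

lemma bb_perp: "i \<in> {..N} \<times> UNIV \<Longrightarrow> g \<in> span E \<Longrightarrow> inner g (bb i) = 0"
  by (auto simp: bb_def ws_perp' wsJ_perp')

lemma ACc_orth: "inner (A z) (Cc w) = 0"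
proof -
  have "inner (A z) (rk J (ws j) (ws (Suc j)) w) = 0" if "j < N" for j
  proof -
    have "inner (A z) (ws (Suc j)) = 0" "inner (A z) (J (ws (Suc j))) = 0"
      using that A_in ws_perp' wsJ_perp' by auto
    then show ?thesis by (simp add: rk_def inner_add_right)
  qed
  then show ?thesis by (simp add: Cc_def inner_sum_right)
qed

lemma ACc_norm: "norm (A z + Cc z) \<le> c * norm z"
proof -
  let ?I = "{..<N} \<times> (UNIV::bool set)"
  have f: "finite ?I" by simp
  have sub: "?I \<subseteq> {..N} \<times> UNIV" by auto
  have e1: "(norm (A z + Cc z))\<^sup>2 = (norm (A z))\<^sup>2 + (norm (Cc z))\<^sup>2"
    using ACc_orth[of z z] by (intro norm_add_Pythagorean) (simp add: orthogonal_def)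
  have "norm (A z) \<le> c * norm (P z)"
    using A_norm[of z] mult_right_mono[OF a_le_c norm_ge_zero[of "P z"]] by linarith
  then have e2: "(norm (A z))\<^sup>2 \<le> c\<^sup>2 * (norm (P z))\<^sup>2"
    using power_mono[of "norm (A z)" "c * norm (P z)" 2] by (simp add: power_mult_distrib)
  have "(\<Sum>i\<in>?I. (inner z (bb i))\<^sup>2) = (\<Sum>i\<in>?I. (inner (z - P z) (bb i))\<^sup>2)"
  proof (intro sum.cong refl)
    fix i assume "i \<in> ?I"
    then have "inner (P z) (bb i) = 0" using sub bb_perp[OF _ P_in] by blast
    then show "(inner z (bb i))\<^sup>2 = (inner (z - P z) (bb i))\<^sup>2" by (simp add: inner_diff_left)
  qed
  moreover have "(\<Sum>i\<in>?I. (inner (z - P z) (bb i))\<^sup>2) \<le> (norm (z - P z))\<^sup>2"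
    using ONF_bessel[OF ONF_subset[OF ONF_bb sub] f, of "z - P z"] by simp
  ultimately have e3: "(norm (Cc z))\<^sup>2 \<le> c\<^sup>2 * (norm (z - P z))\<^sup>2"
    unfolding Cc_norm2 by (simp add: mult_left_mono)
  have e4: "(norm (P z))\<^sup>2 + (norm (z - P z))\<^sup>2 = (norm z)\<^sup>2"
    using proj_pyth[OF ONS, of z] by (simp add: P_def)
  have "(norm (A z + Cc z))\<^sup>2 \<le> c\<^sup>2 * ((norm (P z))\<^sup>2 + (norm (z - P z))\<^sup>2)"
    unfolding e1 distrib_left using e2 e3 by (rule add_mono)
  then have "(norm (A z + Cc z))\<^sup>2 \<le> (c * norm z)\<^sup>2" unfolding e4 power_mult_distrib .
  then show ?thesis by (rule power2_le_imp_le) (use c_pos in simp)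
qed

lemma rkN_norm: "norm (rk J (ws N) bv z) \<le> 2 * norm bv * norm z"
  using rk_norm[of "ws N" bv z] ws_norm[of N] by simp

lemma Tp_norm: "norm (Tp z) \<le> (c + 2 * norm bv) * norm z"
proof -
  have "norm (Tp z) \<le> norm (A z + Cc z) + norm (rk J (ws N) bv z)"
    unfolding Tp_def by (rule norm_triangle_ineq)
  also have "\<dots> \<le> c * norm z + 2 * norm bv * norm z"
    using ACc_norm rkN_norm by (rule add_mono)
  finally show ?thesis by (simp add: algebra_simps)
qed

lemma Tp_bl: "bounded_linear Tp"
  unfolding Tp_def by (intro bounded_linear_add A_bl Cc_bl rk_bl)

lemma Tp_J: "Tp (J z) = J (Tp z)"
  by (simp add: Tp_def A_J Cc_J rk_J J_add)

lemma Tp_span: assumes "g \<in> span E" shows "Tp g = A g"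
  using assms by (simp add: Tp_def Cc_span rk_zero ws_perp' wsJ_perp')

lemma Tp_ws: assumes "k < N" shows "Tp (ws k) = c *\<^sub>R ws (Suc k)"
proof -
  have "rk J (ws N) bv (ws k) = 0"
    using assms ws_orth[of k N] ws_orthJ[of k N] by (intro rk_zero) auto
  then show ?thesis using assms by (simp add: Tp_def A_ws Cc_ws)
qed

lemma Tp_wsN: "Tp (ws N) = bv"
  using ws_orth[of N N] ws_orthJ[of N N] by (simp add: Tp_def A_ws Cc_wsN rk_def)

lemma orbit: "k \<le> N \<Longrightarrow> (Tp ^^ k) xp = (A ^^ k) x + (\<tau> * c ^ k) *\<^sub>R ws k"
proof (induction k)
  case 0 then show ?case by (simp add: xp_def)
next
  case (Suc k)
  then have "(Tp ^^ Suc k) xp = Tp ((A ^^ k) x + (\<tau> * c ^ k) *\<^sub>R ws k)" by simp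
  also have "\<dots> = Tp ((A ^^ k) x) + (\<tau> * c ^ k) *\<^sub>R Tp (ws k)"
    using Tp_bl by (simp add: bounded_linear.linear linear_add linear_scale)
  also have "\<dots> = (A ^^ Suc k) x + (\<tau> * c ^ Suc k) *\<^sub>R ws (Suc k)"
    using Suc.prems by (simp add: Tp_span[OF Apow_in] Tp_ws)
  finally show ?case .
qed

lemma orbit_hit: "(Tp ^^ Suc N) xp = yp"
proof -
  have "(Tp ^^ Suc N) xp = Tp ((A ^^ N) x + (\<tau> * c ^ N) *\<^sub>R ws N)" using orbit by simp
  also have "\<dots> = Tp ((A ^^ N) x) + (\<tau> * c ^ N) *\<^sub>R Tp (ws N)"
    using Tp_bl by (simp add: bounded_linear.linear linear_add linear_scale)
  also have "\<dots> = yp"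
    using tau c_pos by (simp add: Tp_span[OF Apow_in] Tp_wsN bv_def)
  finally show ?thesis .
qed


lemma x_ws0: "inner x (ws 0) = 0" using ws_perp'[OF _ x_in] by simp
lemma x_Jws0: "inner x (J (ws 0)) = 0" using wsJ_perp'[OF _ x_in] by simp
lemma Jws0_x: "inner (J (ws 0)) x = 0" using wsJ_perp[OF _ x_in] by simp
lemma ws0_norm: "norm (ws 0) = 1" using ws_norm by simp
lemma ws0_inner: "inner (ws 0) (ws 0) = 1" using ws_orth[of 0 0] by simp

lemma xp_norm2: "(norm xp)\<^sup>2 = (norm x)\<^sup>2 + \<tau>\<^sup>2"
proof -
  have "orthogonal x (\<tau> *\<^sub>R ws 0)" using x_ws0 by (simp add: orthogonal_def)
  then have "(norm xp)\<^sup>2 = (norm x)\<^sup>2 + (norm (\<tau> *\<^sub>R ws 0))\<^sup>2"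
    unfolding xp_def by (rule norm_add_Pythagorean)
  then show ?thesis using ws0_norm by (simp add: power_mult_distrib)
qed

lemma x_pos: "0 < norm x" using x_nz by simp

lemma xp_ge: "norm x \<le> norm xp"
  using xp_norm2 by (metis le_add_same_cancel1 norm_ge_zero power2_le_imp_le zero_le_power2)

lemma xp_pos: "0 < norm xp" using xp_ge x_pos by linarith

lemma ws0_xp: "inner (ws 0) xp = \<tau>"
  using x_ws0 ws0_inner by (simp add: xp_def inner_add_right inner_commute)

lemma Jws0_xp: "inner (J (ws 0)) xp = 0"
  using Jws0_x by (simp add: xp_def inner_add_right)

lemma ws0_Jxp: "inner (ws 0) (J xp) = 0"
  using Jws0_xp inner_J_left[of "ws 0" xp] by simp

lemma Jws0_Jxp: "inner (J (ws 0)) (J xp) = \<tau>"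
  using ws0_xp by simp

lemma Qv_Qv: "Qv (Qv z) = \<tau> *\<^sub>R Qv z"
  by (simp add: Qv_def rk_def inner_add_left ws0_xp Jws0_xp ws0_Jxp Jws0_Jxp algebra_simps)

lemma Qv_lin: "Qv (a + r *\<^sub>R b) = Qv a + r *\<^sub>R Qv b"
  using rk_bl[of xp "ws 0"] by (simp add: Qv_def bounded_linear.linear linear_add linear_scale)

lemma Qv_lin2: "Qv (a - r *\<^sub>R b) = Qv a - r *\<^sub>R Qv b"
  using rk_bl[of xp "ws 0"] by (simp add: Qv_def bounded_linear.linear linear_diff linear_scale)

lemma t_pos: "0 < t" using tau xp_pos by (simp add: t_def)

lemma t_tau: "t * \<tau> \<le> 1/2"
proof -
  have "\<tau>\<^sup>2 \<le> (norm x / 4)\<^sup>2" using tau by (intro power_mono) auto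
  then have a: "\<tau>\<^sup>2 \<le> (norm x)\<^sup>2 / 16" by (simp add: power_divide)
  have b: "(norm x)\<^sup>2 \<le> (norm xp)\<^sup>2" using xp_norm2 by simp
  have c: "2 * \<tau>\<^sup>2 \<le> (norm xp)\<^sup>2" using a b zero_le_power2[of \<tau>] by linarith
  have p: "0 < (norm xp)\<^sup>2" using xp_pos by simp
  have "t * \<tau> = \<tau>\<^sup>2 / (norm xp)\<^sup>2" by (simp add: t_def power2_eq_square)
  also have "\<dots> \<le> 1/2" using c p by (simp add: pos_divide_le_eq)
  finally show ?thesis .
qed

lemma s_eq: "s * (1 - t * \<tau>) = t"
  using t_tau by (simp add: s_def)

lemma s_le: "s \<le> 2 * t" "0 \<le> s"
proof -
  have "1/2 \<le> 1 - t * \<tau>" using t_tau by simp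
  then show "s \<le> 2 * t" "0 \<le> s" using t_pos t_tau by (simp_all add: s_def divide_simps)
qed

lemma UV: "U (V z) = z"
proof -
  have "U (V z) = z + (s - t - t * (s * \<tau>)) *\<^sub>R Qv z"
    by (simp add: U_def V_def Qv_lin Qv_Qv algebra_simps)
  also have "s - t - t * (s * \<tau>) = 0" using s_eq by (simp add: algebra_simps)
  finally show ?thesis by simp
qed

lemma VU: "V (U z) = z"
proof -
  have "V (U z) = z + (s - t - s * (t * \<tau>)) *\<^sub>R Qv z"
    by (simp add: U_def V_def Qv_lin2 Qv_Qv algebra_simps)
  also have "s - t - s * (t * \<tau>) = 0" using s_eq by (simp add: algebra_simps)
  finally show ?thesis by simp
qed

lemma U_xp: "U xp = x"
proof -
  have "Qv xp = (norm xp)\<^sup>2 *\<^sub>R ws 0"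
    by (simp add: Qv_def rk_def power2_norm_eq_inner)
  moreover have "t * (norm xp)\<^sup>2 = \<tau>" using xp_pos by (simp add: t_def)
  ultimately show ?thesis by (simp add: U_def xp_def)
qed

lemma V_x: "V x = xp" using VU[of xp] U_xp by simp

lemma Qv_norm: "norm (Qv z) \<le> 2 * norm xp * norm z"
  using rk_norm[of xp "ws 0" z] ws0_norm by (simp add: Qv_def)

lemma U_close: "norm (U z - z) \<le> (4 * \<tau> / norm x) * norm z"
proof -
  have "norm (U z - z) = t * norm (Qv z)" using t_pos by (simp add: U_def)
  also have "\<dots> \<le> t * (2 * norm xp * norm z)" using t_pos Qv_norm by (simp add: mult_left_mono)
  also have "\<dots> = (2 * \<tau> / norm xp) * norm z" using xp_pos by (simp add: t_def power2_eq_square)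
  also have "\<dots> \<le> (4 * \<tau> / norm x) * norm z"
    using xp_ge x_pos tau by (intro mult_right_mono) (auto simp: divide_simps)
  finally show ?thesis .
qed

lemma V_close: "norm (V z - z) \<le> (4 * \<tau> / norm x) * norm z"
proof -
  have "norm (V z - z) = s * norm (Qv z)" using s_le by (simp add: V_def)
  also have "\<dots> \<le> (2 * t) * (2 * norm xp * norm z)"
    using s_le t_pos Qv_norm by (intro mult_mono) auto
  also have "\<dots> = (4 * \<tau> / norm xp) * norm z" using xp_pos by (simp add: t_def power2_eq_square)
  also have "\<dots> \<le> (4 * \<tau> / norm x) * norm z"
    using xp_ge x_pos tau by (intro mult_right_mono) (auto simp: divide_simps)
  finally show ?thesis .
qed

lemma Qv_bl: "bounded_linear Qv" by (simp add: Qv_def rk_bl)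
lemma U_bl: "bounded_linear U"
  unfolding U_def by (intro bounded_linear_sub bounded_linear_ident
      bounded_linear_compose[OF bounded_linear_scaleR_right Qv_bl])
lemma V_bl: "bounded_linear V"
  unfolding V_def by (intro bounded_linear_add bounded_linear_ident
      bounded_linear_compose[OF bounded_linear_scaleR_right Qv_bl])
lemma U_J: "U (J z) = J (U z)" by (simp add: U_def Qv_def rk_J J_diff J_scale)
lemma V_J: "V (J z) = J (V z)" by (simp add: V_def Qv_def rk_J J_add J_scale)

lemma Tf_pow: "(Tf ^^ n) z = U ((Tp ^^ n) (V z))"
proof (induction n arbitrary: z)
  case 0 then show ?case by (simp add: UV)
next
  case (Suc n)
  have "(Tf ^^ Suc n) z = Tf ((Tf ^^ n) z)" by simp
  also have "\<dots> = U ((Tp ^^ Suc n) (V z))" using Suc by (simp add: Tf_def VU)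
  finally show ?case .
qed

lemma Tf_hit: "(Tf ^^ Suc N) x = y"
  unfolding Tf_pow by (simp only: V_x orbit_hit yp_def UV)

lemma Tf_bl: "bounded_linear Tf"
  unfolding Tf_def by (intro bounded_linear_compose[OF U_bl] bounded_linear_compose[OF Tp_bl] V_bl)

lemma Tf_J: "Tf (J z) = J (Tf z)" by (simp add: Tf_def U_J V_J Tp_J)

lemma U_norm: "norm (U z) \<le> (1 + 4 * \<tau> / norm x) * norm z"
  using U_close[of z] norm_triangle_ineq2[of "U z" z] by (simp add: algebra_simps)
lemma V_norm: "norm (V z) \<le> (1 + 4 * \<tau> / norm x) * norm z"
  using V_close[of z] norm_triangle_ineq2[of "V z" z] by (simp add: algebra_simps)

lemma Tf_norm: "norm (Tf z) \<le> (1 + 4 * \<tau> / norm x) * ((c + 2 * norm bv) * ((1 + 4 * \<tau> / norm x) * norm z))"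
proof -
  have k: "0 \<le> 1 + 4 * \<tau> / norm x" using tau x_pos by simp
  have L: "0 \<le> c + 2 * norm bv" using c_pos by simp
  have "norm (Tf z) \<le> (1 + 4 * \<tau> / norm x) * norm (Tp (V z))" by (simp add: Tf_def U_norm)
  also have "\<dots> \<le> (1 + 4 * \<tau> / norm x) * ((c + 2 * norm bv) * norm (V z))"
    using k Tp_norm by (rule mult_left_mono[rotated])
  also have "\<dots> \<le> (1 + 4 * \<tau> / norm x) * ((c + 2 * norm bv) * ((1 + 4 * \<tau> / norm x) * norm z))"
    using k L V_norm by (intro mult_left_mono) auto
  finally show ?thesis .
qed

lemma Tp_on_span: assumes "u \<in> span E" "T0 u \<in> span E" shows "Tp u = (1 - 2*\<eta>) *\<^sub>R T0 u"
  using assms by (simp add: Tp_span A_def P_id)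

lemma Tf_close:
  assumes "u \<in> span E" "T0 u \<in> span E"
  shows "norm (Tf u - T0 u) \<le> (4 * \<tau> / norm x) * ((c + 2 * norm bv) * ((1 + 4 * \<tau> / norm x) * norm u))
          + (c + 2 * norm bv) * ((4 * \<tau> / norm x) * norm u) + 2 * \<eta> * (R * norm u)"
proof -
  let ?L = "c + 2 * norm bv" and ?k = "4 * \<tau> / norm x"
  have k: "0 \<le> ?k" using tau x_pos by simp
  have L: "0 \<le> ?L" using c_pos by simp
  have "Tf u - T0 u = (U (Tp (V u)) - Tp (V u)) + Tp (V u - u) + (Tp u - T0 u)"
    using Tp_bl by (simp add: Tf_def bounded_linear.linear linear_diff)
  also have "Tp u - T0 u = (- 2 * \<eta>) *\<^sub>R T0 u" using Tp_on_span[OF assms] by (simp add: algebra_simps)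
  finally have eq: "Tf u - T0 u = (U (Tp (V u)) - Tp (V u)) + Tp (V u - u) + (- 2 * \<eta>) *\<^sub>R T0 u" .
  have "norm (U (Tp (V u)) - Tp (V u)) \<le> ?k * norm (Tp (V u))" by (rule U_close)
  also have "\<dots> \<le> ?k * (?L * norm (V u))" using k Tp_norm by (rule mult_left_mono[rotated])
  also have "\<dots> \<le> ?k * (?L * ((1 + ?k) * norm u))" using k L V_norm by (intro mult_left_mono) auto
  finally have 1: "norm (U (Tp (V u)) - Tp (V u)) \<le> ?k * (?L * ((1 + ?k) * norm u))" .
  have "norm (Tp (V u - u)) \<le> ?L * norm (V u - u)" by (rule Tp_norm)
  also have "\<dots> \<le> ?L * (?k * norm u)" using L V_close by (rule mult_left_mono[rotated])
  finally have 2: "norm (Tp (V u - u)) \<le> ?L * (?k * norm u)" .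
  have 3: "norm ((- 2 * \<eta>) *\<^sub>R T0 u) \<le> 2 * \<eta> * (R * norm u)"
    using eta T0_bound[of u] by (simp add: mult_left_mono)
  show ?thesis unfolding eq using 1 2 3 norm_triangle_le norm_triangle_ineq
    by (smt (verit, ccfv_threshold))
qed

lemma yp_norm: "norm yp \<le> (1 + 4 * \<tau> / norm x) * norm y"
  by (simp add: yp_def V_norm)

lemma bv_norm: "norm bv \<le> (norm yp + ((1 - 2*\<eta>) * R) ^ Suc N * norm x) / (\<tau> * c ^ N)"
proof -
  have "norm bv = norm (yp - (A ^^ Suc N) x) / (\<tau> * c ^ N)"
    using tau c_pos by (simp add: bv_def)
  also have "\<dots> \<le> (norm yp + ((1 - 2*\<eta>) * R) ^ Suc N * norm x) / (\<tau> * c ^ N)"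
    using tau c_pos Apow_norm[of "Suc N"] norm_triangle_ineq4[of yp "(A ^^ Suc N) x"]
    by (intro divide_right_mono) auto
  finally show ?thesis .
qed

end


context cstruct begin

lemma dense_step:
  assumes inf: "\<forall>B::'a set. finite B \<longrightarrow> span B \<noteq> UNIV" and R: "R > 1" and x: "x \<noteq> 0"
    and T0: "T0 \<in> op_ball J R" and F: "finite F" and \<delta>: "\<delta> > 0"
  shows "\<exists>T\<in>op_ball J R. (\<exists>n. (blinfun_apply T ^^ n) x = y)
            \<and> (\<forall>u\<in>F. norm (blinfun_apply T u - blinfun_apply T0 u) < \<delta>)"
proof -
  define S0 where "S0 = F \<union> blinfun_apply T0 ` F \<union> {x}"
  define S where "S = S0 \<union> J ` S0"
  have fS: "finite S" using F by (simp add: S_def S0_def)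
  obtain E where E: "ONS E" "span E = span S" using GS[OF fS] by blast
  have JS: "J ` S \<subseteq> span S"
  proof
    fix z assume "z \<in> J ` S"
    then obtain w where w: "w \<in> S" "z = J w" by auto
    show "z \<in> span S"
    proof (cases "w \<in> S0")
      case True then show ?thesis using w by (simp add: S_def span_base)
    next
      case False
      then obtain w' where "w' \<in> S0" "w = J w'" using w by (auto simp: S_def)
      then have "z = - w'" using w by simp
      then show ?thesis using \<open>w' \<in> S0\<close> by (simp add: S_def span_base span_neg)
    qed
  qed
  have Jinv: "J g \<in> span E" if "g \<in> span E" for g
  proof -
    have "J g \<in> J ` span S" using that E(2) by auto
    also have "\<dots> = span (J ` S)" using span_linear_image[OF lin] by simp
    also have "\<dots> \<subseteq> span S" using JS by (simp add: span_minimal)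
    finally show ?thesis using E(2) by simp
  qed
  have inE: "u \<in> span E" if "u \<in> S0" for u
    using that E(2) by (simp add: S_def span_base)
  have T0c: "T0 (J v) = J (T0 v)" for v using T0 by (simp add: op_ball_def complex_ops_def)
  have T0R: "norm T0 \<le> R" using T0 by (simp add: op_ball_def)
  define M where "M = 1 + (\<Sum>u\<in>F. norm u)"
  have M1: "1 \<le> M" by (simp add: M_def sum_nonneg)
  have uM: "norm u \<le> M" if "u \<in> F" for u
    using member_le_sum[OF that, of norm] F by (simp add: M_def)
  define \<eta> where "\<eta> = min (1/4) (min ((R-1)/(2*R)) (\<delta>/(8*R*M)))"
  have Rp: "0 < R" using R by simp
  have eta: "0 < \<eta>" "\<eta> \<le> 1/4" "\<eta> \<le> (R-1)/(2*R)" "\<eta> \<le> \<delta>/(8*R*M)"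
    using R \<delta> M1 by (auto simp: \<eta>_def)
  define \<kappa> where "\<kappa> = min (\<eta>/8) (\<delta>/(8*R*M))"
  have kap: "0 < \<kappa>" "\<kappa> \<le> \<eta>/8" "\<kappa> \<le> \<delta>/(8*R*M)"
    using eta R \<delta> M1 by (auto simp: \<kappa>_def)
  define \<tau> where "\<tau> = \<kappa> * norm x / 4"
  have xp: "0 < norm x" using x by simp
  have tau: "0 < \<tau>" "\<tau> \<le> norm x / 4" using kap eta xp by (auto simp: \<tau>_def)
  have kt: "4 * \<tau> / norm x = \<kappa>" using xp by (simp add: \<tau>_def)
  define c where "c = (1 - \<eta>) * R"
  define a where "a = (1 - 2*\<eta>) * R"
  have c1: "1 < c"
  proof -
    have "\<eta> * R \<le> (R - 1) / 2" using eta(3) Rp by (simp add: field_simps)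
    then show ?thesis using R by (simp add: c_def algebra_simps)
  qed
  have a0: "0 \<le> a" using eta Rp by (simp add: a_def)
  have ac: "a < c" using eta Rp by (simp add: a_def c_def)
  define K where "K = \<eta> * R * \<tau> / 8"
  have K: "0 < K" using eta Rp tau by (simp add: K_def)
  have h1: "0 \<le> 1/c" "1/c < 1" using c1 by auto
  have h2: "0 \<le> a/c" "a/c < 1" using c1 a0 ac by auto
  have ev1: "eventually (\<lambda>n. (2 * norm y) * (1/c)^n < K) sequentially"
    using order_tendstoD(2)[OF tendsto_mult_right_zero[OF LIMSEQ_realpow_zero[OF h1]] K] .
  have ev2: "eventually (\<lambda>n. (a * norm x) * (a/c)^n < K) sequentially"
    using order_tendstoD(2)[OF tendsto_mult_right_zero[OF LIMSEQ_realpow_zero[OF h2]] K] .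
  obtain N where N1: "(2 * norm y) * (1/c)^N < K" and N2: "(a * norm x) * (a/c)^N < K"
    using eventually_conj[OF ev1 ev2] by (auto simp: eventually_sequentially)
  obtain ws where ws: "\<forall>i\<le>N. \<forall>j\<le>N. inner (ws i) (ws j) = (if i = j then 1 else 0)
            \<and> inner (ws i) (J (ws j)) = 0 \<and> (\<forall>s\<in>S. inner (ws i) s = 0 \<and> inner (ws i) (J s) = 0)"
    using chain_exists[OF inf fS] by blast
  have ws_perp: "inner (ws i) g = 0" if "i \<le> N" "g \<in> span E" for i g
  proof -
    have g: "g \<in> span S" using that(2) E(2) by simp
    have "orthogonal (ws i) g"
      by (rule orthogonal_to_span[OF g]) (use ws that(1) in \<open>auto simp: orthogonal_def\<close>)
    then show ?thesis by (simp add: orthogonal_def)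
  qed
  define P where "P = proj E"
  define A where "A = (\<lambda>z. (1 - 2*\<eta>) *\<^sub>R P (T0 (P z)))"
  define Cc where "Cc = (\<lambda>z. c *\<^sub>R (\<Sum>j<N. rk J (ws j) (ws (Suc j)) z))"
  define xp where "xp = x + \<tau> *\<^sub>R ws 0"
  define t where "t = \<tau> / (norm xp)\<^sup>2"
  define s where "s = t / (1 - t * \<tau>)"
  define Qv where "Qv = rk J xp (ws 0)"
  define U where "U = (\<lambda>z. z - t *\<^sub>R Qv z)"
  define V where "V = (\<lambda>z. z + s *\<^sub>R Qv z)"
  define yp where "yp = V y"
  define bv where "bv = (1 / (\<tau> * c ^ N)) *\<^sub>R (yp - (A ^^ Suc N) x)"
  define Tp where "Tp = (\<lambda>z. A z + Cc z + rk J (ws N) bv z)"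
  define Tf where "Tf = (\<lambda>z. U (Tp (V z)))"
  interpret C: constr J E ws N T0 x y \<eta> c \<tau> R P A Cc Tp U V Qv Tf xp yp bv t s
    apply unfold_locales
    using E(1) Jinv ws ws_perp inE x T0c T0R eta Rp tau
    by (simp_all add: S0_def c_def P_def A_def Cc_def xp_def t_def s_def Qv_def U_def V_def yp_def
        bv_def Tp_def Tf_def)
  have cpos: "0 < c" using c1 by simp
  have cN: "0 < c ^ N" using cpos by simp
  have yp2: "norm yp \<le> 2 * norm y"
  proof -
    have "norm yp \<le> (1 + \<kappa>) * norm y" using C.yp_norm unfolding kt .
    also have "\<dots> \<le> 2 * norm y" using kap eta by (intro mult_right_mono) auto
    finally show ?thesis .
  qed
  have n1: "2 * norm y \<le> K * c ^ N"
  proof -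
    have "2 * norm y = ((2 * norm y) * (1/c)^N) * c ^ N" using cpos by (simp add: power_divide)
    also have "\<dots> \<le> K * c ^ N" using N1 cN by (intro mult_right_mono) auto
    finally show ?thesis .
  qed
  have n2: "a ^ Suc N * norm x \<le> K * c ^ N"
  proof -
    have "a ^ Suc N * norm x = ((a * norm x) * (a/c)^N) * c ^ N" using cpos by (simp add: power_divide)
    also have "\<dots> \<le> K * c ^ N" using N2 cN by (intro mult_right_mono) auto
    finally show ?thesis .
  qed
  have bvn: "norm bv \<le> \<eta> * R / 4"
  proof -
    have "norm bv \<le> (norm yp + a ^ Suc N * norm x) / (\<tau> * c ^ N)"
      using C.bv_norm by (simp add: a_def)
    also have "\<dots> \<le> (2 * K * c ^ N) / (\<tau> * c ^ N)"
      using yp2 n1 n2 tau cN by (intro divide_right_mono) auto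
    also have "\<dots> = \<eta> * R / 4" using tau cN cpos by (simp add: K_def)
    finally show ?thesis .
  qed
  define L where "L = c + 2 * norm bv"
  have L0: "0 \<le> L" using cpos by (simp add: L_def)
  have LR: "L \<le> (1 - \<eta>/2) * R" using bvn by (simp add: L_def c_def algebra_simps)
  have "(1 - \<eta>/2) * R \<le> R" using eta Rp by (simp add: algebra_simps)
  then have LR': "L \<le> R" using LR by linarith
  have k1: "\<kappa> \<le> 1" using kap eta by simp
  have prod: "(1 + \<kappa>) * (L * (1 + \<kappa>)) \<le> R"
  proof -
    have "(1 + \<kappa>) * (L * (1 + \<kappa>)) = ((1 + \<kappa>) * (1 + \<kappa>)) * L" by (simp add: algebra_simps)
    also have "\<dots> \<le> (1 + 3 * \<kappa>) * ((1 - \<eta>/2) * R)"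
    proof (rule mult_mono[OF _ LR])
      show "(1 + \<kappa>) * (1 + \<kappa>) \<le> 1 + 3 * \<kappa>"
        using k1 kap mult_right_mono[OF k1, of \<kappa>] by (simp add: algebra_simps)
    qed (use kap L0 in auto)
    also have "\<dots> \<le> (1 + 3 * \<eta> / 8) * ((1 - \<eta>/2) * R)"
      using kap eta Rp by (intro mult_right_mono) auto
    also have "\<dots> = (1 - \<eta>/8 - 3 * (\<eta> * \<eta>) / 16) * R" by (simp add: field_simps)
    also have "\<dots> \<le> 1 * R"
    proof (rule mult_right_mono)
      have "0 \<le> \<eta> * \<eta>" by simp
      then show "1 - \<eta>/8 - 3 * (\<eta> * \<eta>) / 16 \<le> 1" using eta by linarith
    qed (use Rp in simp)
    finally show ?thesis by simp
  qed
  define T where "T = Blinfun Tf"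
  have Tapp: "blinfun_apply T = Tf" using C.Tf_bl by (simp add: T_def bounded_linear_Blinfun_apply)
  have "T \<in> op_ball J R"
  proof -
    have "norm T \<le> R"
    proof (rule norm_blinfun_bound)
      show "0 \<le> R" using Rp by simp
      fix z
      have "norm (Tf z) \<le> (1 + \<kappa>) * (L * ((1 + \<kappa>) * norm z))" using C.Tf_norm unfolding kt L_def .
      also have "\<dots> = ((1 + \<kappa>) * (L * (1 + \<kappa>))) * norm z" by (simp add: algebra_simps)
      also have "\<dots> \<le> R * norm z" using prod by (intro mult_right_mono) auto
      finally show "norm (blinfun_apply T z) \<le> R * norm z" using Tapp by simp
    qed
    moreover have "T \<in> complex_ops J" using C.Tf_J by (simp add: complex_ops_def Tapp)
    ultimately show ?thesis by (simp add: op_ball_def)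
  qed
  moreover have "(blinfun_apply T ^^ Suc N) x = y" using C.Tf_hit by (simp add: Tapp)
  moreover have "norm (blinfun_apply T u - blinfun_apply T0 u) < \<delta>" if u: "u \<in> F" for u
  proof -
    have u1: "u \<in> span E" "T0 u \<in> span E" using u inE by (auto simp: S0_def)
    have nu: "norm u \<le> M" using uM u .
    have "norm (Tf u - T0 u) \<le> \<kappa> * (L * ((1 + \<kappa>) * norm u)) + L * (\<kappa> * norm u) + 2 * \<eta> * (R * norm u)"
      using C.Tf_close[OF u1] unfolding kt L_def .
    also have "\<dots> \<le> \<kappa> * (R * (2 * M)) + R * (\<kappa> * M) + 2 * \<eta> * (R * M)"
    proof (intro add_mono)
      show "\<kappa> * (L * ((1 + \<kappa>) * norm u)) \<le> \<kappa> * (R * (2 * M))"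
        using kap k1 L0 LR' nu by (intro mult_left_mono mult_mono) auto
      show "L * (\<kappa> * norm u) \<le> R * (\<kappa> * M)"
        using kap L0 LR' nu by (intro mult_mono mult_left_mono) auto
      show "2 * \<eta> * (R * norm u) \<le> 2 * \<eta> * (R * M)"
        using eta Rp nu by (intro mult_left_mono) auto
    qed
    also have "\<dots> = 3 * (\<kappa> * (R * M)) + 2 * (\<eta> * (R * M))" by (simp add: algebra_simps)
    also have "\<dots> \<le> 3 * (\<delta> / 8) + 2 * (\<delta> / 8)"
    proof -
      have RM: "0 < R * M" using Rp M1 by simp
      have "\<kappa> * (R * M) \<le> \<delta> / 8" using kap(3) RM by (simp add: le_divide_eq mult.commute mult.left_commute)
      moreover have "\<eta> * (R * M) \<le> \<delta> / 8" using eta(4) RM by (simp add: le_divide_eq mult.commute mult.left_commute)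
      ultimately show ?thesis by linarith
    qed
    also have "\<dots> < \<delta>" using \<delta> by simp
    finally show ?thesis by (simp add: Tapp)
  qed
  ultimately show ?thesis by blast
qed

end


lemma sot_open_iff:
  fixes B :: "('a::real_normed_vector \<Rightarrow>\<^sub>L 'a) set"
  shows "openin (sot_on B) W \<longleftrightarrow> W \<subseteq> B \<and>
    (\<forall>T0\<in>W. \<exists>F \<delta>. finite F \<and> \<delta> > 0 \<and> {T\<in>B. \<forall>u\<in>F. norm (T u - T0 u) < \<delta>} \<subseteq> W)"
proof
  assume "openin (sot_on B) W"
  then obtain U where U: "open U" "W = blinfun_apply -` U \<inter> B"
    by (auto simp: sot_on_def openin_pullback_topology)
  have "\<exists>F \<delta>. finite F \<and> \<delta> > 0 \<and> {T\<in>B. \<forall>u\<in>F. norm (T u - T0 u) < \<delta>} \<subseteq> W" if T0: "T0 \<in> W" for T0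
  proof -
    have "openin (product_topology (\<lambda>i. euclidean) UNIV) U" using U(1) by (simp add: open_fun_def)
    moreover have "blinfun_apply T0 \<in> U" using T0 U(2) by blast
    ultimately have "\<exists>X. blinfun_apply T0 \<in> (\<Pi>\<^sub>E i\<in>UNIV. X i) \<and> (\<forall>i. openin euclidean (X i)) \<and>
       finite {i. X i \<noteq> topspace euclidean} \<and> (\<Pi>\<^sub>E i\<in>UNIV. X i) \<subseteq> U"
      by (rule product_topology_open_contains_basis)
    then obtain X where X: "blinfun_apply T0 \<in> (\<Pi>\<^sub>E i\<in>UNIV. X i)" "\<And>i. open (X i)"
        "finite {i. X i \<noteq> UNIV}" "(\<Pi>\<^sub>E i\<in>UNIV. X i) \<subseteq> U"
      by auto
    define F where "F = {i. X i \<noteq> UNIV}"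
    have "\<forall>u\<in>F. \<exists>r>0. ball (T0 u) r \<subseteq> X u"
    proof
      fix u
      have "T0 u \<in> X u" using X(1) by (simp add: PiE_iff)
      then show "\<exists>r>0. ball (T0 u) r \<subseteq> X u" using X(2)[of u] open_contains_ball by blast
    qed
    then obtain r where r: "\<And>u. u \<in> F \<Longrightarrow> r u > 0 \<and> ball (T0 u) (r u) \<subseteq> X u" by metis
    define \<delta> where "\<delta> = Min (insert 1 (r ` F))"
    have fF: "finite F" using X(3) by (simp add: F_def)
    have \<delta>: "\<delta> > 0" using r fF by (auto simp: \<delta>_def)
    have \<delta>r: "\<delta> \<le> r u" if "u \<in> F" for u using fF that by (auto simp: \<delta>_def)
    have "{T\<in>B. \<forall>u\<in>F. norm (T u - T0 u) < \<delta>} \<subseteq> W"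
    proof safe
      fix T assume T: "T \<in> B" "\<forall>u\<in>F. norm (T u - T0 u) < \<delta>"
      have "blinfun_apply T \<in> (\<Pi>\<^sub>E i\<in>UNIV. X i)"
      proof (simp add: PiE_iff, intro allI)
        fix i show "T i \<in> X i"
        proof (cases "i \<in> F")
          case True
          have "norm (T i - T0 i) < \<delta>" using T(2) True by blast
          then have "dist (T0 i) (T i) < r i" using \<delta>r[OF True]
            by (simp add: dist_norm norm_minus_commute)
          then show ?thesis using r[OF True] by auto
        next
          case False then show ?thesis by (simp add: F_def)
        qed
      qed
      then show "T \<in> W" using X(4) U(2) T(1) by auto
    qed
    then show ?thesis using fF \<delta> by blast
  qed
  then show "W \<subseteq> B \<and> (\<forall>T0\<in>W. \<exists>F \<delta>. finite F \<and> \<delta> > 0 \<and> {T\<in>B. \<forall>u\<in>F. norm (T u - T0 u) < \<delta>} \<subseteq> W)"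
    using U(2) by auto
next
  assume H: "W \<subseteq> B \<and> (\<forall>T0\<in>W. \<exists>F \<delta>. finite F \<and> \<delta> > 0 \<and> {T\<in>B. \<forall>u\<in>F. norm (T u - T0 u) < \<delta>} \<subseteq> W)"
  then have "\<forall>T0\<in>W. \<exists>p. finite (fst p) \<and> snd p > 0 \<and>
      {T\<in>B. \<forall>u\<in>fst p. norm (blinfun_apply T u - blinfun_apply T0 u) < snd p} \<subseteq> W"
    by (simp add: split_paired_Ex)
  then have "\<exists>g::('a \<Rightarrow>\<^sub>L 'a) \<Rightarrow> 'a set \<times> real. \<forall>T0\<in>W. finite (fst (g T0)) \<and> snd (g T0) > 0 \<and>
      {T\<in>B. \<forall>u\<in>fst (g T0). norm (blinfun_apply T u - blinfun_apply T0 u) < snd (g T0)} \<subseteq> W"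
    by (rule bchoice)
  then obtain g :: "('a \<Rightarrow>\<^sub>L 'a) \<Rightarrow> 'a set \<times> real" where g: "\<forall>T0\<in>W. finite (fst (g T0)) \<and> snd (g T0) > 0 \<and>
      {T\<in>B. \<forall>u\<in>fst (g T0). norm (blinfun_apply T u - blinfun_apply T0 u) < snd (g T0)} \<subseteq> W"
    by (elim exE)
  define F :: "('a \<Rightarrow>\<^sub>L 'a) \<Rightarrow> 'a set" where "F = (\<lambda>T0. fst (g T0))"
  define \<delta> :: "('a \<Rightarrow>\<^sub>L 'a) \<Rightarrow> real" where "\<delta> = (\<lambda>T0. snd (g T0))"
  have F: "finite (F T0) \<and> \<delta> T0 > 0 \<and> {T\<in>B. \<forall>u\<in>F T0. norm (T u - T0 u) < \<delta> T0} \<subseteq> W"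
    if "T0 \<in> W" for T0
    using g that unfolding F_def \<delta>_def by blast
  define U :: "('a \<Rightarrow> 'a) set" where "U = (\<Union>T0\<in>W. {f. \<forall>u\<in>F T0. f u \<in> ball (T0 u) (\<delta> T0)})"
  have "open U" unfolding U_def
  proof (rule open_UN, rule ballI)
    fix T0 assume "T0 \<in> W"
    then have "finite (F T0)" using F by blast
    then show "open {f. \<forall>u\<in>F T0. f u \<in> ball (T0 u) (\<delta> T0)}"
      using product_topology_basis'[of "F T0" "\<lambda>u. ball (T0 u) (\<delta> T0)" "\<lambda>u. u"] by simp
  qed
  moreover have "W = blinfun_apply -` U \<inter> B"
  proof
    show "W \<subseteq> blinfun_apply -` U \<inter> B"
    proof
      fix T assume T: "T \<in> W"
      then have "blinfun_apply T \<in> {f. \<forall>u\<in>F T. f u \<in> ball (T u) (\<delta> T)}" using F[OF T] by simp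
      then show "T \<in> blinfun_apply -` U \<inter> B" using T H unfolding U_def by blast
    qed
    show "blinfun_apply -` U \<inter> B \<subseteq> W"
    proof safe
      fix T assume "blinfun_apply T \<in> U" "T \<in> B"
      then obtain T0 where T0: "T0 \<in> W" "\<forall>u\<in>F T0. dist (T0 u) (T u) < \<delta> T0" by (auto simp: U_def)
      then have "T \<in> {T\<in>B. \<forall>u\<in>F T0. norm (T u - T0 u) < \<delta> T0}"
        using \<open>T \<in> B\<close> by (simp add: dist_norm norm_minus_commute)
      then show "T \<in> W" using F[OF T0(1)] by blast
    qed
  qed
  ultimately show "openin (sot_on B) W"
    by (auto simp: sot_on_def openin_pullback_topology)
qed


definition ddm :: "(nat \<Rightarrow> 'a::real_normed_vector) \<Rightarrow> ('a \<Rightarrow>\<^sub>L 'a) \<Rightarrow> ('a \<Rightarrow>\<^sub>L 'a) \<Rightarrow> real" where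
  "ddm d S T = (SUP k. min ((1/2)^k) (norm (blinfun_apply S (d k) - blinfun_apply T (d k))))"

lemma ddm_bdd: "bdd_above (range (\<lambda>k. min ((1/2::real)^k) (norm (blinfun_apply S (d k) - blinfun_apply T (d k)))))"
proof (rule bdd_aboveI[where M=1], clarify)
  fix k :: nat
  have "(1/2::real)^k \<le> 1" by (simp add: power_le_one)
  then show "min ((1/2::real)^k) (norm (blinfun_apply S (d k) - blinfun_apply T (d k))) \<le> 1" by linarith
qed

lemma ddm_ge: "min ((1/2)^k) (norm (blinfun_apply S (d k) - blinfun_apply T (d k))) \<le> ddm d S T"
  unfolding ddm_def by (rule cSUP_upper[OF _ ddm_bdd]) simp

lemma ddm_le: "(\<And>k. min ((1/2)^k) (norm (blinfun_apply S (d k) - blinfun_apply T (d k))) \<le> r) \<Longrightarrow> ddm d S T \<le> r"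
  unfolding ddm_def by (rule cSUP_least) auto

lemma ddm_nonneg: "0 \<le> ddm d S T"
proof -
  have "0 \<le> min ((1/2::real)^0) (norm (blinfun_apply S (d 0) - blinfun_apply T (d 0)))" by simp
  then show ?thesis using ddm_ge[of 0 S d T] by linarith
qed

lemma min_tri: "(c::real) \<le> a + b \<Longrightarrow> 0 \<le> a \<Longrightarrow> 0 \<le> b \<Longrightarrow> 0 \<le> m \<Longrightarrow> min m c \<le> min m a + min m b"
  by (auto simp: min_def)

lemma ddm_commute: "ddm d S T = ddm d T S"
  unfolding ddm_def by (simp add: norm_minus_commute)

lemma ddm_triangle: "ddm d S U \<le> ddm d S T + ddm d T U"
proof (rule ddm_le)
  fix k
  have "norm (blinfun_apply S (d k) - blinfun_apply U (d k))
     \<le> norm (blinfun_apply S (d k) - blinfun_apply T (d k)) + norm (blinfun_apply T (d k) - blinfun_apply U (d k))"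
    using norm_triangle_ineq[of "blinfun_apply S (d k) - blinfun_apply T (d k)" "blinfun_apply T (d k) - blinfun_apply U (d k)"]
    by simp
  then have "min ((1/2)^k) (norm (blinfun_apply S (d k) - blinfun_apply U (d k)))
      \<le> min ((1/2)^k) (norm (blinfun_apply S (d k) - blinfun_apply T (d k)))
       + min ((1/2)^k) (norm (blinfun_apply T (d k) - blinfun_apply U (d k)))"
    by (rule min_tri) simp_all
  also have "\<dots> \<le> ddm d S T + ddm d T U" by (intro add_mono ddm_ge)
  finally show "min ((1/2)^k) (norm (blinfun_apply S (d k) - blinfun_apply U (d k))) \<le> ddm d S T + ddm d T U" .
qed

lemma ddm_self: "ddm d S S = 0"
  by (rule antisym[OF ddm_le ddm_nonneg]) simp

lemma blinfun_eq_dense: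
  assumes "closure (range d) = UNIV" "\<And>k. blinfun_apply S (d k) = blinfun_apply T (d k)"
  shows "S = T"
proof (rule blinfun_eqI)
  fix z
  have "closed {z. blinfun_apply S z - blinfun_apply T z = 0}"
    by (intro closed_Collect_eq continuous_intros continuous_on_const)
  moreover have "range d \<subseteq> {z. blinfun_apply S z - blinfun_apply T z = 0}" using assms(2) by auto
  ultimately have "closure (range d) \<subseteq> {z. blinfun_apply S z - blinfun_apply T z = 0}"
    by (rule closure_minimal[rotated])
  then show "blinfun_apply S z = blinfun_apply T z" using assms(1) by auto
qed

lemma ddm_zero:
  assumes "closure (range d) = UNIV" "ddm d S T = 0"
  shows "S = T"
proof (rule blinfun_eq_dense[OF assms(1)])
  fix k
  have "min ((1/2)^k) (norm (blinfun_apply S (d k) - blinfun_apply T (d k))) \<le> 0"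
    using ddm_ge[of k S d T] assms(2) by simp
  moreover have "(0::real) < (1/2)^k" by simp
  ultimately have "norm (blinfun_apply S (d k) - blinfun_apply T (d k)) \<le> 0" by linarith
  then show "blinfun_apply S (d k) = blinfun_apply T (d k)" by simp
qed

lemma ddm_metric:
  assumes "closure (range d) = UNIV"
  shows "Metric_space M (ddm d)"
  by unfold_locales (auto simp: ddm_nonneg ddm_commute ddm_triangle ddm_self ddm_zero[OF assms])


lemma half_pow_small: "(r::real) > 0 \<Longrightarrow> \<exists>K. (1/2::real)^K < r"
proof -
  assume r: "r > 0"
  have "eventually (\<lambda>n. (1/2::real)^n < r) sequentially"
    using order_tendstoD(2)[OF LIMSEQ_realpow_zero[of "1/2::real"] r] by simp
  then show ?thesis by (auto simp: eventually_sequentially)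
qed

lemma ddm_bound:
  assumes "\<And>k. k < K \<Longrightarrow> norm (blinfun_apply S (d k) - blinfun_apply T (d k)) \<le> r1" "(1/2)^K \<le> r1"
  shows "ddm d S T \<le> r1"
proof (rule ddm_le)
  fix k
  show "min ((1/2)^k) (norm (blinfun_apply S (d k) - blinfun_apply T (d k))) \<le> r1"
  proof (cases "k < K")
    case True then show ?thesis using assms(1)[OF True] by linarith
  next
    case False
    then have "(1/2::real)^k \<le> (1/2)^K" by (intro power_decreasing) auto
    then show ?thesis using assms(2) by linarith
  qed
qed

lemma ddm_small_term:
  assumes "ddm d S T < (1/2)^k * m" "m \<le> 1"
  shows "norm (blinfun_apply S (d k) - blinfun_apply T (d k)) < (1/2)^k * m"
proof -
  have h: "min ((1/2)^k) (norm (blinfun_apply S (d k) - blinfun_apply T (d k))) < (1/2)^k * m"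
    using ddm_ge[of k S d T] assms(1) by linarith
  have "(1/2::real)^k * m \<le> (1/2)^k" using assms(2) by (simp add: mult_left_le)
  then show ?thesis using h by (auto simp: min_def split: if_splits)
qed

lemma tri3: "norm (a + b + (c::'a::real_normed_vector)) \<le> norm a + norm b + norm c"
proof -
  have "norm (a + b + c) \<le> norm (a + b) + norm c" by (rule norm_triangle_ineq)
  also have "\<dots> \<le> norm a + norm b + norm c" using norm_triangle_ineq[of a b] by simp
  finally show ?thesis .
qed

locale topo = cstruct J for J :: "'a::{real_inner,complete_space} \<Rightarrow> 'a" +
  fixes d :: "nat \<Rightarrow> 'a" and R :: real
  assumes dense: "closure (range d) = UNIV" and Rpos: "0 < R"
begin

abbreviation "BB \<equiv> op_ball J R"

sublocale M: Metric_space BB "ddm d" by (rule ddm_metric[OF dense])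

lemma near_dense: "e > 0 \<Longrightarrow> \<exists>k. norm (z - d k) < e"
proof -
  assume e: "e > 0"
  have "z \<in> closure (range d)" using dense by simp
  then obtain y where "y \<in> range d" "dist y z < e" using closure_approachable e by blast
  then show ?thesis by (auto simp: dist_norm norm_minus_commute)
qed

lemma BB_norm: "T \<in> BB \<Longrightarrow> norm (blinfun_apply T z) \<le> R * norm z"
  using norm_blinfun[of T z] by (simp add: op_ball_def) (meson mult_right_mono norm_ge_zero order_trans)

lemma three_eps:
  assumes "T \<in> BB" "T0 \<in> BB"
  shows "norm (blinfun_apply T u - blinfun_apply T0 u) \<le>
     2 * R * norm (u - w) + norm (blinfun_apply T w - blinfun_apply T0 w)"
proof -
  have "blinfun_apply T u - blinfun_apply T0 u = blinfun_apply T (u - w) + (blinfun_apply T w - blinfun_apply T0 w) + blinfun_apply T0 (w - u)"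
    by (simp add: blinfun.diff_right)
  then have "norm (blinfun_apply T u - blinfun_apply T0 u) \<le> norm (blinfun_apply T (u - w)) + norm (blinfun_apply T w - blinfun_apply T0 w) + norm (blinfun_apply T0 (w - u))"
    by (simp only: tri3)
  also have "\<dots> \<le> R * norm (u - w) + norm (blinfun_apply T w - blinfun_apply T0 w) + R * norm (u - w)"
    using BB_norm[OF assms(1), of "u - w"] BB_norm[OF assms(2), of "w - u"] by (simp add: norm_minus_commute)
  finally show ?thesis by simp
qed

lemma mtop_eq: "M.mtopology = sot_on BB"
proof (subst topology_eq, intro allI)
  fix S
  show "openin M.mtopology S \<longleftrightarrow> openin (sot_on BB) S"
  proof
    assume S: "openin M.mtopology S"
    have "\<exists>F \<delta>. finite F \<and> \<delta> > 0 \<and> {T\<in>BB. \<forall>u\<in>F. norm (blinfun_apply T u - blinfun_apply T0 u) < \<delta>} \<subseteq> S"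
      if T0: "T0 \<in> S" for T0
    proof -
      obtain r where r: "r > 0" "M.mball T0 r \<subseteq> S" using S T0 M.openin_mtopology by blast
      have T0B: "T0 \<in> BB" using S T0 M.openin_mtopology by blast
      obtain K where K: "(1/2::real)^K < r/2" using half_pow_small[of "r/2"] r by auto
      have "{T\<in>BB. \<forall>u\<in>d ` {..<K}. norm (blinfun_apply T u - blinfun_apply T0 u) < r/2} \<subseteq> S"
      proof safe
        fix T assume T: "T \<in> BB" "\<forall>u\<in>d ` {..<K}. norm (blinfun_apply T u - blinfun_apply T0 u) < r/2"
        have "ddm d T0 T \<le> r/2"
        proof (rule ddm_bound)
          fix k assume "k < K"
          then show "norm (blinfun_apply T0 (d k) - blinfun_apply T (d k)) \<le> r/2"
            using T(2) by (auto simp: norm_minus_commute intro: less_imp_le)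
        qed (use K in simp)
        then have "T \<in> M.mball T0 r" using T0B T(1) r by simp
        then show "T \<in> S" using r by blast
      qed
      then show ?thesis using r by (intro exI[of _ "d ` {..<K}"] exI[of _ "r/2"]) auto
    qed
    moreover have "S \<subseteq> BB" using S M.openin_mtopology by blast
    ultimately show "openin (sot_on BB) S" unfolding sot_open_iff by blast
  next
    assume S: "openin (sot_on BB) S"
    have "\<exists>r>0. M.mball T0 r \<subseteq> S" if T0: "T0 \<in> S" for T0
    proof -
      have SS: "S \<subseteq> BB \<and> (\<forall>T0\<in>S. \<exists>F \<delta>. finite F \<and> \<delta> > 0 \<and>
          {T\<in>BB. \<forall>u\<in>F. norm (blinfun_apply T u - blinfun_apply T0 u) < \<delta>} \<subseteq> S)"
        using S unfolding sot_open_iff .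
      then obtain F \<delta> where F: "finite F" "\<delta> > 0"
        "{T\<in>BB. \<forall>u\<in>F. norm (blinfun_apply T u - blinfun_apply T0 u) < \<delta>} \<subseteq> S"
        using T0 by blast
      have T0B: "T0 \<in> BB" using SS T0 by blast
      have "\<forall>u\<in>F. \<exists>k. norm (u - d k) < \<delta> / (4 * R)" using near_dense F(2) Rpos by simp
      then obtain kk where kk: "\<And>u. u \<in> F \<Longrightarrow> norm (u - d (kk u)) < \<delta> / (4 * R)" by metis
      define K where "K = Max (insert 0 (kk ` F))"
      define m where "m = min 1 (\<delta>/2)"
      have m: "0 < m" "m \<le> 1" "m \<le> \<delta>/2" using F(2) by (auto simp: m_def)
      define r where "r = (1/2::real)^K * m"
      have r: "r > 0" using m by (simp add: r_def)
      have "M.mball T0 r \<subseteq> S"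
      proof
        fix T assume "T \<in> M.mball T0 r"
        then have T: "T \<in> BB" "ddm d T0 T < r" by auto
        have "norm (blinfun_apply T u - blinfun_apply T0 u) < \<delta>" if u: "u \<in> F" for u
        proof -
          have kK: "kk u \<le> K" using u F(1) by (auto simp: K_def)
          have "(1/2::real)^K \<le> (1/2)^(kk u)" using kK by (intro power_decreasing) auto
          then have "(1/2::real)^K * m \<le> (1/2)^(kk u) * m" using m by (intro mult_right_mono) auto
          then have "ddm d T0 T < (1/2)^(kk u) * m" using T(2) by (simp add: r_def)
          then have "norm (blinfun_apply T0 (d (kk u)) - blinfun_apply T (d (kk u))) < (1/2)^(kk u) * m"
            using m by (intro ddm_small_term) auto
          also have "\<dots> \<le> m" using m power_le_one[of "1/2::real" "kk u"]
            by (intro mult_left_le_one_le) auto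
          finally have a: "norm (blinfun_apply T (d (kk u)) - blinfun_apply T0 (d (kk u))) < \<delta>/2"
            using m by (simp add: norm_minus_commute)
          have b: "2 * R * norm (u - d (kk u)) < \<delta>/2"
            using kk[OF u] Rpos by (simp add: field_simps)
          show ?thesis using three_eps[OF T(1) T0B, of u "d (kk u)"] a b by linarith
        qed
        then show "T \<in> S" using F(3) T(1) by blast
      qed
      then show ?thesis using r by blast
    qed
    moreover have "S \<subseteq> BB" using S unfolding sot_open_iff by blast
    ultimately show "openin M.mtopology S" using M.openin_mtopology by blast
  qed
qed


lemma mcomplete: "M.mcomplete"
  unfolding M.mcomplete_def
proof (intro allI impI)
  fix \<sigma> :: "nat \<Rightarrow> 'a \<Rightarrow>\<^sub>L 'a"
  assume C: "M.MCauchy \<sigma>"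
  have sB: "\<sigma> n \<in> BB" for n using C by (auto simp: M.MCauchy_def)
  have cau: "\<exists>N. \<forall>n n'. N \<le> n \<longrightarrow> N \<le> n' \<longrightarrow> ddm d (\<sigma> n) (\<sigma> n') < e" if "e > 0" for e
    using C that by (auto simp: M.MCauchy_def)
  have c1: "\<exists>N. \<forall>n n'. N \<le> n \<longrightarrow> N \<le> n' \<longrightarrow>
      norm (blinfun_apply (\<sigma> n) (d k) - blinfun_apply (\<sigma> n') (d k)) < e" if e: "e > 0" for k e
  proof -
    define m where "m = min 1 e"
    have m: "0 < m" "m \<le> 1" "m \<le> e" using e by (auto simp: m_def)
    obtain N where N: "\<forall>n n'. N \<le> n \<longrightarrow> N \<le> n' \<longrightarrow> ddm d (\<sigma> n) (\<sigma> n') < (1/2)^k * m"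
      using cau[of "(1/2)^k * m"] m by auto
    have "norm (blinfun_apply (\<sigma> n) (d k) - blinfun_apply (\<sigma> n') (d k)) < e"
      if "N \<le> n" "N \<le> n'" for n n'
    proof -
      have "norm (blinfun_apply (\<sigma> n) (d k) - blinfun_apply (\<sigma> n') (d k)) < (1/2)^k * m"
        using N that m by (intro ddm_small_term) auto
      also have "\<dots> \<le> m" using m power_le_one[of "1/2::real" k] by (intro mult_left_le_one_le) auto
      finally show ?thesis using m by linarith
    qed
    then show ?thesis by blast
  qed
  have c2: "Cauchy (\<lambda>n. blinfun_apply (\<sigma> n) z)" for z
    unfolding Cauchy_def
  proof (intro allI impI)
    fix e :: real assume e: "e > 0"
    obtain k where k: "norm (z - d k) < e / (4 * R)" using near_dense[of "e / (4 * R)"] e Rpos by auto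
    obtain N where N: "\<forall>n n'. N \<le> n \<longrightarrow> N \<le> n' \<longrightarrow>
      norm (blinfun_apply (\<sigma> n) (d k) - blinfun_apply (\<sigma> n') (d k)) < e/2"
      using c1[of "e/2" k] e by auto
    have "dist (blinfun_apply (\<sigma> m) z) (blinfun_apply (\<sigma> n) z) < e" if "N \<le> m" "N \<le> n" for m n
    proof -
      have "norm (blinfun_apply (\<sigma> m) z - blinfun_apply (\<sigma> n) z) \<le>
          2 * R * norm (z - d k) + norm (blinfun_apply (\<sigma> m) (d k) - blinfun_apply (\<sigma> n) (d k))"
        by (rule three_eps[OF sB sB])
      moreover have "2 * R * norm (z - d k) < e/2" using k Rpos by (simp add: field_simps)
      moreover have "norm (blinfun_apply (\<sigma> m) (d k) - blinfun_apply (\<sigma> n) (d k)) < e/2"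
        using N that by blast
      ultimately show ?thesis by (simp add: dist_norm)
    qed
    then show "\<exists>M. \<forall>m\<ge>M. \<forall>n\<ge>M. dist (blinfun_apply (\<sigma> m) z) (blinfun_apply (\<sigma> n) z) < e" by blast
  qed
  define L where "L = (\<lambda>z. lim (\<lambda>n. blinfun_apply (\<sigma> n) z))"
  have Lt: "(\<lambda>n. blinfun_apply (\<sigma> n) z) \<longlonglongrightarrow> L z" for z
    using c2[of z] by (simp add: L_def Cauchy_convergent_iff convergent_LIMSEQ_iff)
  have Ladd: "L (a + b) = L a + L b" for a b
  proof -
    have "(\<lambda>n. blinfun_apply (\<sigma> n) (a + b)) \<longlonglongrightarrow> L a + L b"
      using tendsto_add[OF Lt[of a] Lt[of b]] by (simp add: blinfun.add_right)
    then show ?thesis using Lt[of "a + b"] LIMSEQ_unique by blast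
  qed
  have Lscale: "L (r *\<^sub>R a) = r *\<^sub>R L a" for r a
  proof -
    have "(\<lambda>n. blinfun_apply (\<sigma> n) (r *\<^sub>R a)) \<longlonglongrightarrow> r *\<^sub>R L a"
      using tendsto_scaleR[OF tendsto_const Lt[of a], of r] by (simp add: blinfun.scaleR_right)
    then show ?thesis using Lt[of "r *\<^sub>R a"] LIMSEQ_unique by blast
  qed
  have Lnorm: "norm (L z) \<le> R * norm z" for z
  proof (rule tendsto_le[OF trivial_limit_sequentially tendsto_const tendsto_norm[OF Lt[of z]]])
    show "\<forall>\<^sub>F n in sequentially. norm (blinfun_apply (\<sigma> n) z) \<le> R * norm z"
      using BB_norm[OF sB] by simp
  qed
  have LJ: "L (J z) = J (L z)" for z
  proof -
    have "(\<lambda>n. blinfun_apply (\<sigma> n) (J z)) \<longlonglongrightarrow> J (L z)"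
    proof -
      have "(\<lambda>n. J (blinfun_apply (\<sigma> n) z)) \<longlonglongrightarrow> J (L z)"
        by (rule bounded_linear.tendsto[OF bl Lt])
      moreover have "blinfun_apply (\<sigma> n) (J z) = J (blinfun_apply (\<sigma> n) z)" for n
        using sB[of n] by (simp add: op_ball_def complex_ops_def)
      ultimately show ?thesis by simp
    qed
    then show ?thesis using Lt[of "J z"] LIMSEQ_unique by blast
  qed
  have Lbl: "bounded_linear L"
    by (rule bounded_linear_intro[where K=R]) (auto simp: Ladd Lscale Lnorm mult.commute)
  define T where "T = Blinfun L"
  have Tapp: "blinfun_apply T = L" using Lbl by (simp add: T_def bounded_linear_Blinfun_apply)
  have TB: "T \<in> BB"
  proof -
    have "norm T \<le> R" by (rule norm_blinfun_bound) (use Rpos Lnorm Tapp in auto)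
    moreover have "T \<in> complex_ops J" by (simp add: complex_ops_def Tapp LJ)
    ultimately show ?thesis by (simp add: op_ball_def)
  qed
  have "limitin M.mtopology \<sigma> T sequentially"
    unfolding M.limit_metric_sequentially
  proof (intro conjI TB allI impI)
    fix e :: real assume e: "e > 0"
    obtain K where K: "(1/2::real)^K < e/2" using half_pow_small[of "e/2"] e by auto
    have "\<forall>k\<in>{..<K}. eventually (\<lambda>n. norm (blinfun_apply (\<sigma> n) (d k) - L (d k)) < e/2) sequentially"
    proof
      fix k
      have "(\<lambda>n. norm (blinfun_apply (\<sigma> n) (d k) - L (d k))) \<longlonglongrightarrow> 0"
        using Lt[of "d k"] by (simp add: LIM_zero_iff tendsto_norm_zero_iff)
      then show "eventually (\<lambda>n. norm (blinfun_apply (\<sigma> n) (d k) - L (d k)) < e/2) sequentially"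
        using e by (intro order_tendstoD(2)) auto
    qed
    then have "eventually (\<lambda>n. \<forall>k\<in>{..<K}. norm (blinfun_apply (\<sigma> n) (d k) - L (d k)) < e/2) sequentially"
      by (intro eventually_ball_finite) auto
    then obtain N where N: "\<And>n k. n \<ge> N \<Longrightarrow> k < K \<Longrightarrow> norm (blinfun_apply (\<sigma> n) (d k) - L (d k)) < e/2"
      by (auto simp: eventually_sequentially)
    have "\<sigma> n \<in> BB \<and> ddm d (\<sigma> n) T < e" if "n \<ge> N" for n
    proof -
      have "ddm d (\<sigma> n) T \<le> e/2"
      proof (rule ddm_bound)
        fix k assume "k < K"
        then show "norm (blinfun_apply (\<sigma> n) (d k) - blinfun_apply T (d k)) \<le> e/2"
          using N[OF that] Tapp by (simp add: less_imp_le)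
      next
        show "(1/2)^K \<le> e/2" using K by simp
      qed
      then show ?thesis using sB e by simp
    qed
    then show "\<exists>N. \<forall>n\<ge>N. \<sigma> n \<in> BB \<and> ddm d (\<sigma> n) T < e" by blast
  qed
  then show "\<exists>T. limitin M.mtopology \<sigma> T sequentially" by blast
qed

lemma cms: "completely_metrizable_space (sot_on BB)"
  unfolding completely_metrizable_space_def
  using M.Metric_space_axioms mcomplete mtop_eq by metis

end


lemma pow_approx:
  fixes T T0 :: "'a::real_normed_vector \<Rightarrow>\<^sub>L 'a"
  assumes TR: "norm T \<le> R" and R1: "1 \<le> R"
    and H: "\<forall>i<n. norm (blinfun_apply T ((blinfun_apply T0 ^^ i) x) - blinfun_apply T0 ((blinfun_apply T0 ^^ i) x)) \<le> \<delta>"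
  shows "norm ((blinfun_apply T ^^ n) x - (blinfun_apply T0 ^^ n) x) \<le> real n * R ^ n * \<delta>"
  using H
proof (induction n)
  case 0 then show ?case by simp
next
  case (Suc n)
  let ?a = "(blinfun_apply T ^^ n) x" and ?b = "(blinfun_apply T0 ^^ n) x"
  have IH: "norm (?a - ?b) \<le> real n * R ^ n * \<delta>" using Suc by auto
  have hn: "norm (blinfun_apply T ?b - blinfun_apply T0 ?b) \<le> \<delta>" using Suc.prems by auto
  then have d0: "0 \<le> \<delta>" by (meson norm_ge_zero order_trans)
  have eq: "(blinfun_apply T ^^ Suc n) x - (blinfun_apply T0 ^^ Suc n) x
      = blinfun_apply T (?a - ?b) + (blinfun_apply T ?b - blinfun_apply T0 ?b)"
    by (simp add: blinfun.diff_right)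
  have "norm ((blinfun_apply T ^^ Suc n) x - (blinfun_apply T0 ^^ Suc n) x)
      \<le> norm (blinfun_apply T (?a - ?b)) + norm (blinfun_apply T ?b - blinfun_apply T0 ?b)"
    unfolding eq by (rule norm_triangle_ineq)
  also have "norm (blinfun_apply T (?a - ?b)) \<le> R * (real n * R ^ n * \<delta>)"
  proof -
    have "norm (blinfun_apply T (?a - ?b)) \<le> norm T * norm (?a - ?b)" by (rule norm_blinfun)
    also have "\<dots> \<le> R * (real n * R ^ n * \<delta>)" using TR IH R1 by (intro mult_mono) auto
    finally show ?thesis .
  qed
  also have "R * (real n * R ^ n * \<delta>) + norm (blinfun_apply T ?b - blinfun_apply T0 ?b)
      \<le> R * (real n * R ^ n * \<delta>) + R ^ Suc n * \<delta>"
  proof -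
    have "1 \<le> R ^ Suc n" by (rule one_le_power[OF R1])
    then have "\<delta> \<le> R ^ Suc n * \<delta>" using d0 by (simp add: mult_le_cancel_right1)
    then show ?thesis using hn by simp
  qed
  also have "\<dots> = real (Suc n) * R ^ Suc n * \<delta>" by (simp add: algebra_simps)
  finally show ?case by simp
qed

context topo begin

definition Ob :: "'a \<Rightarrow> 'a \<Rightarrow> real \<Rightarrow> ('a \<Rightarrow>\<^sub>L 'a) set" where
  "Ob x y r = {T\<in>BB. \<exists>n. norm ((blinfun_apply T ^^ n) x - y) < r}"

lemma Ob_open:
  assumes R1: "1 \<le> R"
  shows "openin (sot_on BB) (Ob x y r)"
  unfolding sot_open_iff
proof (intro conjI ballI)
  show "Ob x y r \<subseteq> BB" by (auto simp: Ob_def)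
  fix T0 assume "T0 \<in> Ob x y r"
  then obtain n where T0: "T0 \<in> BB" "norm ((blinfun_apply T0 ^^ n) x - y) < r" by (auto simp: Ob_def)
  define \<rho> where "\<rho> = norm ((blinfun_apply T0 ^^ n) x - y)"
  have Rn: "0 < R ^ n" using Rpos by simp
  define q where "q = (real n + 1) * R ^ n"
  have q: "0 < q" using Rn by (simp add: q_def)
  define \<delta> where "\<delta> = (r - \<rho>) / (2 * q)"
  have \<delta>: "\<delta> > 0" using T0(2) q by (simp add: \<delta>_def \<rho>_def)
  define F where "F = (\<lambda>i. (blinfun_apply T0 ^^ i) x) ` {..<n}"
  have "{T\<in>BB. \<forall>u\<in>F. norm (blinfun_apply T u - blinfun_apply T0 u) < \<delta>} \<subseteq> Ob x y r"
  proof safe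
    fix T assume T: "T \<in> BB" "\<forall>u\<in>F. norm (blinfun_apply T u - blinfun_apply T0 u) < \<delta>"
    have "norm ((blinfun_apply T ^^ n) x - (blinfun_apply T0 ^^ n) x) \<le> real n * R ^ n * \<delta>"
      by (rule pow_approx[OF _ R1]) (use T in \<open>auto simp: op_ball_def F_def intro: less_imp_le\<close>)
    also have "\<dots> \<le> (real n + 1) * R ^ n * \<delta>" using Rn \<delta> by (intro mult_right_mono) auto
    also have "\<dots> = (r - \<rho>) / 2" using q unfolding q_def[symmetric] by (simp add: \<delta>_def)
    also have "\<dots> < r - \<rho>" using T0(2) by (simp add: \<rho>_def)
    finally have "norm ((blinfun_apply T ^^ n) x - y) < r"
      using norm_triangle_ineq[of "(blinfun_apply T ^^ n) x - (blinfun_apply T0 ^^ n) x" "(blinfun_apply T0 ^^ n) x - y"]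
      by (simp add: \<rho>_def)
    then show "T \<in> Ob x y r" using T(1) by (auto simp: Ob_def)
  qed
  moreover have "finite F" by (simp add: F_def)
  ultimately show "\<exists>F \<delta>. finite F \<and> 0 < \<delta> \<and> {T\<in>BB. \<forall>u\<in>F. norm (blinfun_apply T u - blinfun_apply T0 u) < \<delta>} \<subseteq> Ob x y r"
    using \<delta> by blast
qed

lemma Ob_dense:
  assumes inf: "\<forall>B::'a set. finite B \<longrightarrow> span B \<noteq> UNIV" and R1: "R > 1" and x: "x \<noteq> 0" and r: "r > 0"
  shows "(sot_on BB) closure_of (Ob x y r) = topspace (sot_on BB)"
  unfolding dense_intersects_open
proof (intro allI impI)
  fix U assume U: "openin (sot_on BB) U \<and> U \<noteq> {}"
  then obtain T0 where T0: "T0 \<in> U" by blast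
  have UU: "U \<subseteq> BB \<and> (\<forall>T0\<in>U. \<exists>F \<delta>. finite F \<and> \<delta> > 0 \<and>
          {T\<in>BB. \<forall>u\<in>F. norm (blinfun_apply T u - blinfun_apply T0 u) < \<delta>} \<subseteq> U)"
    using U unfolding sot_open_iff by blast
  then obtain F \<delta> where F: "finite F" "\<delta> > 0"
      "{T\<in>BB. \<forall>u\<in>F. norm (blinfun_apply T u - blinfun_apply T0 u) < \<delta>} \<subseteq> U"
    using T0 by blast
  have T0B: "T0 \<in> BB" using UU T0 by blast
  obtain T where T: "T \<in> BB" "\<exists>n. (blinfun_apply T ^^ n) x = y"
      "\<forall>u\<in>F. norm (blinfun_apply T u - blinfun_apply T0 u) < \<delta>"
    using dense_step[OF inf R1 x T0B F(1) F(2)] by blast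
  have "T \<in> U" using F(3) T(1,3) by blast
  moreover have "T \<in> Ob x y r"
  proof -
    obtain n where "(blinfun_apply T ^^ n) x = y" using T(2) by blast
    then show ?thesis unfolding Ob_def using T(1) r by (auto intro!: exI[of _ n])
  qed
  ultimately show "Ob x y r \<inter> U \<noteq> {}" by blast
qed

lemma hc_iff:
  "hypercyclic T x \<longleftrightarrow> (\<forall>k j. \<exists>n. norm ((blinfun_apply T ^^ n) x - d k) < 1 / real (Suc j))"
proof
  assume h: "hypercyclic T x"
  show "\<forall>k j. \<exists>n. norm ((blinfun_apply T ^^ n) x - d k) < 1 / real (Suc j)"
  proof (intro allI)
    fix k j
    have "d k \<in> closure (range (\<lambda>n. (blinfun_apply T ^^ n) x))" using h by (simp add: hypercyclic_def)
    then have "\<forall>e>0. \<exists>z\<in>range (\<lambda>n. (blinfun_apply T ^^ n) x). dist z (d k) < e"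
      by (simp add: closure_approachable)
    moreover have "(0::real) < 1 / real (Suc j)" by simp
    ultimately obtain z where "z \<in> range (\<lambda>n. (blinfun_apply T ^^ n) x)" "dist z (d k) < 1 / real (Suc j)"
      by blast
    then show "\<exists>n. norm ((blinfun_apply T ^^ n) x - d k) < 1 / real (Suc j)" by (auto simp: dist_norm)
  qed
next
  assume h: "\<forall>k j. \<exists>n. norm ((blinfun_apply T ^^ n) x - d k) < 1 / real (Suc j)"
  have "z \<in> closure (range (\<lambda>n. (blinfun_apply T ^^ n) x))" for z
    unfolding closure_approachable
  proof (intro allI impI)
    fix e :: real assume e: "e > 0"
    obtain k where k: "norm (z - d k) < e/2" using near_dense[of "e/2"] e by auto
    obtain j where "inverse (real (Suc j)) < e/2" using reals_Archimedean[of "e/2"] e by auto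
    then have j: "1 / real (Suc j) < e/2" by (simp add: inverse_eq_divide)
    obtain n where n: "norm ((blinfun_apply T ^^ n) x - d k) < 1 / real (Suc j)" using h by blast
    have "norm ((blinfun_apply T ^^ n) x - z) \<le> norm ((blinfun_apply T ^^ n) x - d k) + norm (d k - z)"
      using norm_triangle_ineq[of "(blinfun_apply T ^^ n) x - d k" "d k - z"] by simp
    moreover have "norm (d k - z) = norm (z - d k)" by (rule norm_minus_commute)
    ultimately have "dist ((blinfun_apply T ^^ n) x) z < e"
      using n j k by (simp add: dist_norm)
    then show "\<exists>y\<in>range (\<lambda>n. (blinfun_apply T ^^ n) x). dist y z < e" by blast
  qed
  then show "hypercyclic T x" by (auto simp: hypercyclic_def)
qed

end

theorem proposition7:
  fixes J :: "'a::{real_inner,complete_space} \<Rightarrow> 'a" and R :: real and x :: 'a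
  assumes "complex_structure J"
    and "\<exists>D. countable D \<and> closure D = (UNIV :: 'a set)"
    and "\<forall>B::'a set. finite B \<longrightarrow> span B \<noteq> UNIV"
    and "R > 1"
    and "x \<noteq> 0"
  shows "gdelta_in (sot_on (op_ball J R)) (L_HC J R x)
       \<and> (sot_on (op_ball J R)) closure_of (L_HC J R x) = op_ball J R"
proof -
  obtain D where D: "countable D" "closure D = (UNIV :: 'a set)" using assms(2) by blast
  have Dne: "D \<noteq> {}" using D(2) by auto
  define d where "d = from_nat_into D"
  have rd: "range d = D" using D(1) Dne by (simp add: d_def range_from_nat_into)
  interpret topo J d R
    by unfold_locales (use assms(1,4) D(2) rd in auto)
  define G where "G = (\<lambda>(k, j). Ob x (d k) (1 / real (Suc j))) ` (UNIV :: (nat \<times> nat) set)"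
  have top: "topspace (sot_on BB) = BB" by (simp add: sot_on_def topspace_pullback_topology)
  have LG: "L_HC J R x = \<Inter>G"
    by (auto simp: L_HC_def G_def Ob_def hc_iff)
  have cG: "countable G" by (simp add: G_def)
  have oG: "openin (sot_on BB) U" if "U \<in> G" for U
    using that Ob_open assms(4) by (auto simp: G_def)
  have dG: "(sot_on BB) closure_of U = topspace (sot_on BB)" if "U \<in> G" for U
    using that Ob_dense[OF assms(3) assms(4) assms(5)] by (auto simp: G_def)
  have "gdelta_in (sot_on BB) (L_HC J R x)"
    unfolding gdelta_in_alt intersection_of_def
  proof (intro conjI)
    show "L_HC J R x \<subseteq> topspace (sot_on BB)" by (auto simp: top L_HC_def)
    show "\<exists>U. countable U \<and> U \<subseteq> Collect (openin (sot_on BB)) \<and> \<Inter>U = L_HC J R x"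
      using cG oG LG by blast
  qed
  moreover have "(sot_on BB) closure_of (L_HC J R x) = BB"
    unfolding LG using Baire_category[OF _ cG] cms oG dG top by auto
  ultimately show ?thesis by simp
qed


end
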